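(* Assume the setting described in the context. Then: (i) there is an absolute constant $c>0$ such that $\lambda(E_q')\ge c\,\lambda(E_q)$ for all $q\ge1$, where $E_q=\{\boldsymbol\alpha\in[0,1]^2:\|q\boldsymbol\alpha-\boldsymbol\gamma\|<\psi(q)\}$; (ii) for every ball $B\subseteq[0,1)^2$ (of positive radius), $$\lim_{\substack{q\to\infty\\ q\in\operatorname{supp}(\psi)}}\frac{\lambda(B\cap E_q')}{\lambda(B)\lambda(E_q')}=1.$$
   Context: Notation: $|\cdot|$ is the maximum norm on $\mathbb{R}^2$; $\|\mathbf x\|$ is the max-norm distance from $\mathbf x\in\mathbb{R}^2$ to $\mathbb{Z}^2$; $\lambda$ is Lebesgue measure on $\mathbb{R}^2$; for an integer vector $\mathbf x=(x_1,x_2)$ and integer $n$, $\gcd(\mathbf x,n)=\gcd(x_1,x_2,n)$; $\operatorname{supp}(\psi)=\{q:\psi(q)>0\}$. Shift reduction: Fix $\boldsymbol\gamma\in\mathbb{R}^2\setminus\mathbb{Q}^2$ and $\sigma\in(0,1)$. For $k\ge0$ let $B_k\ge1$ be the smallest integer for which there exists $\mathbf A_k\in\mathbb{Z}^2$ with $|\boldsymbol\gamma-\mathbf A_k/B_k|<2^{-k}$, and fix such an $\mathbf A_k$. When $B_k\ge2$, let $1\le b_k<B_k$ be minimal such that there exists $\mathbf a_k\in\mathbb{Z}^2$ with $|\boldsymbol\gamma-\mathbf a_k/b_k|\le1/(b_kB_k^{1/2})$, and fix such an $\mathbf a_k$. Let $K_0$ be such that $B_k\ge2$ for all $k\ge K_0$.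 Let $\psi:\mathbb{N}\to[0,1/2]$ satisfy $\psi(q)<2^{-K_0+1}$ for all $q$. For $q$ with $\psi(q)>0$, let $k$ be the integer with $2^{-k}<\psi(q)\le2^{-k+1}$ and set $$S_q=\begin{cases}\{\mathbf u\in(\mathbb{Z}/q\mathbb{Z})^2:\gcd(B_k\mathbf u+\mathbf A_k,B_kq)=1\}&\text{if }B_k\le 2^{\sigma k},\\ \{\mathbf u\in(\mathbb{Z}/q\mathbb{Z})^2:\gcd(b_k\mathbf u+\mathbf a_k,b_kq)=1\}&\text{if }B_k>2^{\sigma k},\end{cases}$$ $$E_q'=\{\boldsymbol\alpha\in[0,1]^2:|q\boldsymbol\alpha-\mathbf u-\boldsymbol\gamma|<\psi(q)\text{ for some }\mathbf u\in\mathbb{Z}^2\text{ with class mod }q\text{ in }S_q\};$$ if $\psi(q)=0$, $E_q'=\emptyset$. *)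

theory Defs
  imports "HOL-Analysis.Analysis"
begin

definition maxnorm :: "real \<times> real \<Rightarrow> real" where
  "maxnorm x = max \<bar>fst x\<bar> \<bar>snd x\<bar>"

definition distZ2 :: "real \<times> real \<Rightarrow> real" where
  "distZ2 x = Inf {maxnorm (x - (real_of_int m1, real_of_int m2)) | m1 m2. True}"

definition approx :: "real \<times> real \<Rightarrow> int \<times> int \<Rightarrow> nat \<Rightarrow> real" where
  "approx \<gamma> A B = maxnorm (\<gamma> - (real_of_int (fst A) / real B, real_of_int (snd A) / real B))"

definition BB :: "real \<times> real \<Rightarrow> nat \<Rightarrow> nat" where
  "BB \<gamma> k = (LEAST B::nat. 1 \<le> B \<and> (\<exists>A. approx \<gamma> A B < 1 / 2 ^ k))"

definition bb :: "real \<times> real \<Rightarrow> nat \<Rightarrow> nat" where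
  "bb \<gamma> k = (LEAST b::nat. 1 \<le> b \<and> b < BB \<gamma> k \<and>
      (\<exists>a. approx \<gamma> a b \<le> 1 / (real b * sqrt (real (BB \<gamma> k)))))"

definition kk :: "(nat \<Rightarrow> real) \<Rightarrow> nat \<Rightarrow> nat" where
  "kk \<psi> q = (THE k::nat. 1 / 2 ^ k < \<psi> q \<and> \<psi> q \<le> 2 / 2 ^ k)"

definition gcd3 :: "int \<times> int \<Rightarrow> int \<Rightarrow> int" where
  "gcd3 x n = gcd (gcd (fst x) (snd x)) n"

text \<open>S_q, with residue classes mod q represented by pairs in {0..<q}^2.\<close>
definition Sq :: "real \<times> real \<Rightarrow> real \<Rightarrow> (nat \<Rightarrow> int \<times> int) \<Rightarrow> (nat \<Rightarrow> int \<times> int)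
                   \<Rightarrow> (nat \<Rightarrow> real) \<Rightarrow> nat \<Rightarrow> (int \<times> int) set" where
  "Sq \<gamma> \<sigma> A a \<psi> q = (let k = kk \<psi> q in
     if real (BB \<gamma> k) \<le> 2 powr (\<sigma> * real k)
     then {u \<in> {0..<int q} \<times> {0..<int q}.
             gcd3 (int (BB \<gamma> k) * fst u + fst (A k), int (BB \<gamma> k) * snd u + snd (A k))
                  (int (BB \<gamma> k) * int q) = 1}
     else {u \<in> {0..<int q} \<times> {0..<int q}.
             gcd3 (int (bb \<gamma> k) * fst u + fst (a k), int (bb \<gamma> k) * snd u + snd (a k))
                  (int (bb \<gamma> k) * int q) = 1})"

definition Eq' :: "real \<times> real \<Rightarrow> real \<Rightarrow> (nat \<Rightarrow> int \<times> int) \<Rightarrow> (nat \<Rightarrow> int \<times> int)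
                   \<Rightarrow> (nat \<Rightarrow> real) \<Rightarrow> nat \<Rightarrow> (real \<times> real) set" where
  "Eq' \<gamma> \<sigma> A a \<psi> q = (if \<psi> q = 0 then {} else
     {\<alpha> \<in> {0..1} \<times> {0..1}. \<exists>u1 u2::int.
        (u1 mod int q, u2 mod int q) \<in> Sq \<gamma> \<sigma> A a \<psi> q \<and>
        maxnorm (real q *\<^sub>R \<alpha> - (real_of_int u1, real_of_int u2) - \<gamma>) < \<psi> q})"

definition Eq :: "real \<times> real \<Rightarrow> (nat \<Rightarrow> real) \<Rightarrow> nat \<Rightarrow> (real \<times> real) set" where
  "Eq \<gamma> \<psi> q = {\<alpha> \<in> {0..1} \<times> {0..1}. distZ2 (real q *\<^sub>R \<alpha> - \<gamma>) < \<psi> q}"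

definition maxball :: "real \<times> real \<Rightarrow> real \<Rightarrow> (real \<times> real) set" where
  "maxball c r = {x. maxnorm (x - c) < r}"

text \<open>The standing setting of the shift reduction.  A k and a k are the fixed choices
  of A_k and a_k.\<close>
definition setting :: "real \<times> real \<Rightarrow> real \<Rightarrow> nat \<Rightarrow> (nat \<Rightarrow> real)
                        \<Rightarrow> (nat \<Rightarrow> int \<times> int) \<Rightarrow> (nat \<Rightarrow> int \<times> int) \<Rightarrow> bool" where
  "setting \<gamma> \<sigma> K0 \<psi> A a \<longleftrightarrow>
     \<not> (fst \<gamma> \<in> \<rat> \<and> snd \<gamma> \<in> \<rat>) \<and> 0 < \<sigma> \<and> \<sigma> < 1 \<and>
     (\<forall>k. approx \<gamma> (A k) (BB \<gamma> k) < 1 / 2 ^ k) \<and>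
     (\<forall>k. 2 \<le> BB \<gamma> k \<longrightarrow>
          approx \<gamma> (a k) (bb \<gamma> k) \<le> 1 / (real (bb \<gamma> k) * sqrt (real (BB \<gamma> k)))) \<and>
     (\<forall>k\<ge>K0. 2 \<le> BB \<gamma> k) \<and>
     (\<forall>q\<ge>1. 0 \<le> \<psi> q \<and> \<psi> q \<le> 1/2 \<and> \<psi> q < 2 powr (1 - real K0))"

end

theory Submission
  imports Defs "HOL-Number_Theory.Number_Theory" "HOL-Real_Asymp.Real_Asymp"
begin

definition Bx :: "real \<times> real \<Rightarrow> nat \<Rightarrow> real \<Rightarrow> int \<Rightarrow> int \<Rightarrow> (real \<times> real) set" where
  "Bx \<gamma> q \<psi> u1 u2 = {\<alpha>. maxnorm (real q *\<^sub>R \<alpha> - (real_of_int u1, real_of_int u2) - \<gamma>) < \<psi>}"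

lemma Bx_eq_box:
  assumes "q \<ge> 1"
  shows "Bx \<gamma> q \<psi> u1 u2 = box ((real_of_int u1 + fst \<gamma> - \<psi>)/q, (real_of_int u2 + snd \<gamma> - \<psi>)/q)
                           ((real_of_int u1 + fst \<gamma> + \<psi>)/q, (real_of_int u2 + snd \<gamma> + \<psi>)/q)"
proof -
  have q: "real q > 0" using assms by simp
  show ?thesis
    unfolding Bx_def maxnorm_def set_eq_iff mem_box Basis_prod_def
    using q by (auto simp: field_simps abs_less_iff)
qed

lemma Bx_measure:
  assumes "q \<ge> 1" "\<psi> \<ge> 0"
  shows "measure lborel (Bx \<gamma> q \<psi> u1 u2) = (2*\<psi>/q)^2"
  using assms unfolding Bx_eq_box[OF assms(1)] measure_lborel_box_eq
  by (auto simp: Basis_prod_def field_simps power2_eq_square)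

lemma Bx_open: "open (Bx \<gamma> q \<psi> u1 u2)" if "q \<ge> 1"
  unfolding Bx_eq_box[OF that] by (rule open_box)

definition Sset :: "real \<times> real \<Rightarrow> nat \<Rightarrow> real \<Rightarrow> (int \<Rightarrow> int \<Rightarrow> bool) \<Rightarrow> (real \<times> real) set" where
  "Sset \<gamma> q \<psi> G = {\<alpha> \<in> {0..1} \<times> {0..1}. \<exists>u1 u2. G u1 u2 \<and>
      maxnorm (real q *\<^sub>R \<alpha> - (real_of_int u1, real_of_int u2) - \<gamma>) < \<psi>}"

lemma Sset_eq: "Sset \<gamma> q \<psi> G = ({0..1} \<times> {0..1}) \<inter> (\<Union>u\<in>{u. G (fst u) (snd u)}. Bx \<gamma> q \<psi> (fst u) (snd u))"
  unfolding Sset_def Bx_def by (auto; blast)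

lemma Sset_sets: assumes "q \<ge> 1" shows "Sset \<gamma> q \<psi> G \<in> sets lborel"
proof -
  have "open (\<Union>u\<in>{u. G (fst u) (snd u)}. Bx \<gamma> q \<psi> (fst u) (snd u))"
    by (intro open_UN ballI Bx_open[OF assms])
  then show ?thesis unfolding Sset_eq
    by (intro sets.Int borel_open borel_closed) (auto simp: closed_Times)
qed

lemma Sset_fmeas: assumes "q \<ge> 1" "R \<in> sets lborel" shows "R \<inter> Sset \<gamma> q \<psi> G \<in> fmeasurable lborel"
proof (rule fmeasurableI2[of "cbox (0,0) (1,1)"])
  show "cbox (0,0) (1::real,1::real) \<in> fmeasurable lborel" by simp
  show "R \<inter> Sset \<gamma> q \<psi> G \<subseteq> cbox (0, 0) (1, 1)"
    unfolding Sset_def by (auto simp: cbox_Pair_eq)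
  show "R \<inter> Sset \<gamma> q \<psi> G \<in> sets lborel" using assms Sset_sets by auto
qed

lemma Bx_disj:
  assumes "\<psi> \<le> 1/2" "(u1,u2) \<noteq> (v1,v2)"
  shows "Bx \<gamma> q \<psi> u1 u2 \<inter> Bx \<gamma> q \<psi> v1 v2 = {}"
proof (rule ccontr)
  assume "\<not> ?thesis"
  then obtain x where x: "x \<in> Bx \<gamma> q \<psi> u1 u2" "x \<in> Bx \<gamma> q \<psi> v1 v2" by auto
  have "\<bar>real_of_int u1 - v1\<bar> < 1" "\<bar>real_of_int u2 - v2\<bar> < 1"
    using x assms(1) unfolding Bx_def maxnorm_def by auto
  then have "u1 = v1" "u2 = v2" by linarith+
  then show False using assms by auto
qed

lemma Sset_upper:
  assumes q: "q \<ge> 1" and psi: "0 \<le> \<psi>" and R: "R \<in> sets lborel" and I: "finite I"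
    and cov: "\<And>u1 u2 x. G u1 u2 \<Longrightarrow> x \<in> R \<Longrightarrow> x \<in> {0..1}\<times>{0..1} \<Longrightarrow> x \<in> Bx \<gamma> q \<psi> u1 u2 \<Longrightarrow> (u1,u2) \<in> I"
  shows "measure lborel (R \<inter> Sset \<gamma> q \<psi> G) \<le> (2*\<psi>/q)^2 * card {u\<in>I. G (fst u) (snd u)}"
proof -
  let ?J = "{u\<in>I. G (fst u) (snd u)}"
  have sub: "R \<inter> Sset \<gamma> q \<psi> G \<subseteq> (\<Union>u\<in>?J. Bx \<gamma> q \<psi> (fst u) (snd u))"
    unfolding Sset_eq using cov by fastforce
  have fJ: "finite ?J" using I by simp
  have "measure lborel (R \<inter> Sset \<gamma> q \<psi> G) \<le> measure lborel (\<Union>u\<in>?J. Bx \<gamma> q \<psi> (fst u) (snd u))"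
  proof (rule measure_mono_fmeasurable[OF sub])
    show "R \<inter> Sset \<gamma> q \<psi> G \<in> sets lborel" using Sset_sets[OF q] R by auto
    show "(\<Union>u\<in>?J. Bx \<gamma> q \<psi> (fst u) (snd u)) \<in> fmeasurable lborel"
      using fJ by (intro fmeasurable.finite_UN) (auto simp: Bx_eq_box[OF q])
  qed
  also have "\<dots> \<le> (\<Sum>u\<in>?J. measure lborel (Bx \<gamma> q \<psi> (fst u) (snd u)))"
    using fJ by (intro measure_UNION_le) (auto simp: Bx_eq_box[OF q])
  also have "\<dots> = (2*\<psi>/q)^2 * card ?J"
    using Bx_measure[OF q psi] by simp
  finally show ?thesis .
qed

lemma Sset_lower:
  assumes q: "q \<ge> 1" and psi: "0 \<le> \<psi>" "\<psi> \<le> 1/2" and R: "R \<in> sets lborel" and J: "finite J"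
    and K: "\<And>u. u \<in> J \<Longrightarrow> K u \<subseteq> Bx \<gamma> q \<psi> (fst u) (snd u) \<inter> R \<inter> ({0..1}\<times>{0..1})"
    and Ks: "\<And>u. u \<in> J \<Longrightarrow> K u \<in> sets lborel"
    and Km: "\<And>u. u \<in> J \<Longrightarrow> measure lborel (K u) = m"
    and G: "\<And>u. u \<in> J \<Longrightarrow> G (fst u) (snd u)"
  shows "m * card J \<le> measure lborel (R \<inter> Sset \<gamma> q \<psi> G)"
proof -
  have sub: "(\<Union>u\<in>J. K u) \<subseteq> R \<inter> Sset \<gamma> q \<psi> G"
  proof
    fix x assume "x \<in> (\<Union>u\<in>J. K u)"
    then obtain u where u: "u \<in> J" "x \<in> K u" by auto
    then show "x \<in> R \<inter> Sset \<gamma> q \<psi> G" using K[OF u(1)] G[OF u(1)] unfolding Sset_eq by fastforce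
  qed
  have fin: "\<And>u. u \<in> J \<Longrightarrow> emeasure lborel (K u) \<noteq> \<infinity>"
  proof -
    fix u assume u: "u \<in> J"
    have "emeasure lborel (K u) \<le> emeasure lborel (Bx \<gamma> q \<psi> (fst u) (snd u))"
      using K[OF u] Ks[OF u] by (intro emeasure_mono) (auto simp: Bx_eq_box[OF q])
    also have "\<dots> < \<infinity>" unfolding Bx_eq_box[OF q] by (rule emeasure_lborel_box_finite)
    finally show "emeasure lborel (K u) \<noteq> \<infinity>" by simp
  qed
  have disj: "disjoint_family_on K J"
    unfolding disjoint_family_on_def
  proof (intro ballI impI)
    fix u v assume uv: "u \<in> J" "v \<in> J" "u \<noteq> v"
    have "Bx \<gamma> q \<psi> (fst u) (snd u) \<inter> Bx \<gamma> q \<psi> (fst v) (snd v) = {}"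
      using uv(3) psi(2) by (intro Bx_disj) (auto simp: prod_eq_iff)
    then show "K u \<inter> K v = {}" using K[OF uv(1)] K[OF uv(2)] by blast
  qed
  have "m * card J = (\<Sum>u\<in>J. measure lborel (K u))" using Km by simp
  also have "\<dots> = measure lborel (\<Union>u\<in>J. K u)"
    using J Ks disj fin by (intro measure_finite_Union[symmetric]) auto
  also have "\<dots> \<le> measure lborel (R \<inter> Sset \<gamma> q \<psi> G)"
    using sub Sset_fmeas[OF q R] J Ks by (intro measure_mono_fmeasurable) auto
  finally show ?thesis .
qed

lemma zle_div_iff': "(p::int) > 0 \<Longrightarrow> (k::int) \<le> x div p \<longleftrightarrow> k * p \<le> x"
  by (smt (verit, best) minus_div_mult_eq_mod nonzero_mult_div_cancel_right pos_mod_sign zdiv_mono1)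


lemma oneD_solutions:
  fixes a c e :: int and p L :: nat
  assumes p: "p \<ge> 1" and cop: "coprime c (int p)"
  shows "\<exists>x0 M::nat. (\<forall>x. (x \<in> {a..<a + int L} \<and> int p dvd c * x + e) \<longleftrightarrow> (\<exists>s<M. x = x0 + int p * int s))
           \<and> \<bar>real M - real L / real p\<bar> \<le> 1"
proof -
  obtain c' where c': "[c * c' = 1] (mod int p)"
    using cop by (metis cong_solve_coprime_int coprime_commute)
  define x0 where "x0 = a + ((- e * c' - a) mod int p)"
  have pp: "int p > 0" using p by simp
  have x0a: "a \<le> x0" "x0 < a + int p" unfolding x0_def using pp by auto
  have x0cong: "[x0 = - e * c'] (mod int p)"
    unfolding x0_def cong_def by (simp add: mod_add_right_eq)
  have dvd_iff: "int p dvd c * x + e \<longleftrightarrow> [x = x0] (mod int p)" for x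
  proof -
    have "int p dvd c * x + e \<longleftrightarrow> [c * x + e = 0] (mod int p)" by (simp add: cong_0_iff)
    also have "\<dots> \<longleftrightarrow> [c * x = - e] (mod int p)"
      by (metis add.commute add_diff_cancel_left' cong_diff_iff_cong_0 diff_minus_eq_add minus_diff_eq)
    also have "\<dots> \<longleftrightarrow> [x = - e * c'] (mod int p)"
    proof
      assume h: "[c * x = - e] (mod int p)"
      have "[c' * (c * x) = c' * (- e)] (mod int p)" using h cong_scalar_left by blast
      moreover have "[c' * (c * x) = x] (mod int p)"
        using cong_scalar_right[OF c', of x] by (simp add: mult.assoc mult.left_commute mult.commute)
      ultimately show "[x = - e * c'] (mod int p)"
        by (metis cong_sym cong_trans mult.commute)
    next
      assume h: "[x = - e * c'] (mod int p)"
      have "[c * x = c * (- e * c')] (mod int p)" using h cong_scalar_left by blast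
      moreover have "[c * (- e * c') = - e] (mod int p)"
        using cong_scalar_left[OF c', of "-e"] by (simp add: mult.assoc mult.left_commute mult.commute)
      ultimately show "[c * x = - e] (mod int p)" using cong_trans by blast
    qed
    also have "\<dots> \<longleftrightarrow> [x = x0] (mod int p)" using x0cong
      by (meson cong_sym cong_trans)
    finally show ?thesis .
  qed
  define d where "d = a + int L - x0"
  define M where "M = nat ((d + int p - 1) div int p)"
  have Miff: "int s < (d + int p - 1) div int p \<longleftrightarrow> int p * int s < d" for s
  proof -
    have "int s < (d + int p - 1) div int p \<longleftrightarrow> (int s + 1) * int p \<le> d + int p - 1"
      using pp zle_div_iff' by (metis add1_zle_eq)
    also have "\<dots> \<longleftrightarrow> int p * int s < d" by (simp add: algebra_simps) linarith
    finally show ?thesis .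
  qed
  have main: "(x \<in> {a..<a + int L} \<and> int p dvd c * x + e) \<longleftrightarrow> (\<exists>s<M. x = x0 + int p * int s)" for x
  proof
    assume h: "x \<in> {a..<a + int L} \<and> int p dvd c * x + e"
    then have "[x = x0] (mod int p)" using dvd_iff by blast
    then obtain k where k: "x = x0 + int p * k"
      by (metis cong_iff_lin cong_sym)
    have "k \<ge> 0"
    proof (rule ccontr)
      assume "\<not> k \<ge> 0" then have "k \<le> -1" by simp
      then have "int p * k \<le> - int p" using pp mult_left_mono[of k "-1" "int p"] by simp
      then show False using k h x0a by auto
    qed
    then obtain s where s: "k = int s" by (metis nonneg_int_cases)
    have "int p * int s < d" using h k s unfolding d_def by auto
    then have "int s < (d + int p - 1) div int p" using Miff by blast
    then have "s < M" unfolding M_def by linarith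
    then show "\<exists>s<M. x = x0 + int p * int s" using k s by blast
  next
    assume "\<exists>s<M. x = x0 + int p * int s"
    then obtain s where s: "s < M" "x = x0 + int p * int s" by blast
    have "int s < (d + int p - 1) div int p" using s(1) unfolding M_def by linarith
    then have "int p * int s < d" using Miff by blast
    moreover have "int p * int s \<ge> 0" by simp
    ultimately have "x \<in> {a..<a + int L}" using s x0a pp unfolding d_def atLeastLessThan_iff by linarith
    moreover have "[x = x0] (mod int p)" using s(2)
      by (metis cong_add_lcancel_0 cong_mult_self_left cong_sym)
    then have "int p dvd c * x + e" using dvd_iff by blast
    ultimately show "x \<in> {a..<a + int L} \<and> int p dvd c * x + e" by blast
  qed
  have Mb: "\<bar>real M - real L / real p\<bar> \<le> 1"
  proof -
    have pr: "real p > 0" using p by simp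
    have dfl: "real_of_int ((d + int p - 1) div int p) * real p \<le> d + p - 1"
      "real_of_int ((d + int p - 1) div int p) * real p \<ge> d"
    proof -
      have "(d + int p - 1) div int p * int p \<le> d + int p - 1"
        using zle_div_iff'[OF pp, of "(d + int p - 1) div int p" "d + int p - 1"] by simp
      then have "real_of_int ((d + int p - 1) div int p * int p) \<le> real_of_int (d + int p - 1)"
        by (simp only: of_int_le_iff)
      then show "real_of_int ((d + int p - 1) div int p) * real p \<le> d + p - 1"
        by simp
      have "(d + int p - 1) - (d + int p - 1) div int p * int p < int p"
        using pos_mod_bound[OF pp, of "d + int p - 1"] minus_mult_div_eq_mod[of "d + int p - 1" "int p"]
        by (simp add: mult.commute)
      then have "(d + int p - 1) div int p * int p \<ge> d" by simp
      then have "real_of_int ((d + int p - 1) div int p * int p) \<ge> real_of_int d"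
        by (simp only: of_int_le_iff)
      then show "real_of_int ((d + int p - 1) div int p) * real p \<ge> d"
        by simp
    qed
    have dr: "real_of_int d \<le> L" "real_of_int d > real L - p" using x0a unfolding d_def by auto
    have key: "\<bar>real M * p - L\<bar> \<le> p"
    proof (cases "(d + int p - 1) div int p \<ge> 0")
      case True
      then have "real M = real_of_int ((d + int p - 1) div int p)" unfolding M_def by simp
      then show ?thesis using dfl dr by (simp add: abs_le_iff) 
    next
      case False
      then have M0: "M = 0" unfolding M_def by simp
      have "real_of_int ((d + int p - 1) div int p) \<le> -1" using False by simp
      then have "real_of_int ((d + int p - 1) div int p) * real p \<le> - real p" using pr
        using mult_right_mono[of "real_of_int ((d + int p - 1) div int p)" "-1" "real p"] by simp
      then have "real L < real p" using dfl dr by linarith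
      then show ?thesis using M0 by simp
    qed
    have "\<bar>real M - real L / real p\<bar> = \<bar>real M * p - L\<bar> / p"
      using pr by (simp add: field_simps abs_div_pos[symmetric] del: abs_divide)
    also have "\<dots> \<le> 1" using key pr by simp
    finally show ?thesis .
  qed
  show ?thesis using main Mb by blast
qed

lemma lin_aux: fixes T L1 L2 X Y :: real
  assumes "L1 / 2 + L2 / 2 + 1 \<le> X/2 + Y/2 + T" "0 \<le> X" "0 \<le> Y" "1 \<le> T"
  shows "3 / 2 * X + 3 / 2 * Y + 10 * T + L1 / 2 + L2 / 2 + 1 \<le> 3 * X + 3 * Y + 12 * T"
  using assms by linarith

lemma arith_step:
  fixes f g \<rho> L1 L2 M1 M2 p T :: real
  assumes "\<bar>f - L1*L2*\<rho>\<bar> \<le> T*(L1+L2+4)" "\<bar>g - M1*M2*\<rho>\<bar> \<le> T*(M1+M2+4)"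
    "\<bar>M1 - L1/p\<bar> \<le> 1" "\<bar>M2 - L2/p\<bar> \<le> 1" "p \<ge> 2" "0 \<le> \<rho>" "\<rho> \<le> 1" "T \<ge> 1"
    "L1 \<ge> 0" "L2 \<ge> 0" "M1 \<ge> 0" "M2 \<ge> 0"
  shows "\<bar>(f - g) - L1*L2*((1 - 1/p^2)*\<rho>)\<bar> \<le> (3*T)*(L1+L2+4)"
proof -
  have e: "(f - g) - L1*L2*((1 - 1/p^2)*\<rho>) = (f - L1*L2*\<rho>) - (g - M1*M2*\<rho>) - \<rho>*(M1*M2 - L1*L2/p^2)"
    by (simp add: algebra_simps power2_eq_square)
  have d: "M1*M2 - L1*L2/p^2 = (M1 - L1/p)*M2 + (L1/p)*(M2 - L2/p)"
    using assms(5) by (simp add: algebra_simps power2_eq_square)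
  have "\<bar>(M1 - L1/p)*M2\<bar> \<le> M2" using assms(3,12) by (simp add: abs_mult mult_left_le_one_le)
  moreover have "\<bar>(L1/p)*(M2 - L2/p)\<bar> \<le> L1/p"
  proof -
    have "\<bar>(L1/p)*(M2 - L2/p)\<bar> = (L1/p) * \<bar>M2 - L2/p\<bar>" using assms(5,9) by (simp add: abs_mult)
    also have "\<dots> \<le> (L1/p) * 1" using assms(4,5,9) by (intro mult_left_mono) auto
    finally show ?thesis by simp
  qed
  ultimately have "\<bar>M1*M2 - L1*L2/p^2\<bar> \<le> M2 + L1/p" unfolding d by linarith
  then have r: "\<bar>\<rho>*(M1*M2 - L1*L2/p^2)\<bar> \<le> M2 + L1/p"
    using assms(6,7) by (simp add: abs_mult) (meson abs_ge_zero dual_order.trans mult_left_le_one_le)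
  have M0: "L1/p \<le> L1/2" "L2/p \<le> L2/2"
    subgoal by (rule divide_left_mono, use assms(5,9,10) in auto)
    subgoal by (rule divide_left_mono, use assms(5,9,10) in auto)
    done
  have M1: "M1 \<le> L1/2 + 1" "M2 \<le> L2/2 + 1" "L1/p \<le> L1/2"
    using assms(3,4) M0 by (auto simp: abs_le_iff)
  have "\<bar>(f - g) - L1*L2*((1 - 1/p^2)*\<rho>)\<bar> \<le> T*(L1+L2+4) + T*(M1+M2+4) + (M2 + L1/p)"
    unfolding e using assms(1,2) r by linarith
  also have "\<dots> \<le> T*(L1+L2+4) + T*(L1/2+L2/2+6) + (L2/2 + 1 + L1/2)"
  proof -
    have "T*(M1+M2+4) \<le> T*(L1/2+L2/2+6)" by (rule mult_left_mono) (use M1 assms(8) in auto)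
    then show ?thesis using M1 by linarith
  qed
  also have "\<dots> \<le> (3*T)*(L1+L2+4)"
  proof -
    have "L1/2 + L2/2 + 1 \<le> T*(L1/2+L2/2+1)" using assms(8,9,10) by (simp add: mult_le_cancel_right1)
    moreover have "T*L1 \<ge> 0" "T*L2 \<ge> 0" using assms(8,9,10) by auto
    moreover have "T*(L1/2+L2/2+1) = (T*L1)/2 + (T*L2)/2 + T"
      "T*(L1+L2+4) + T*(L1/2+L2/2+6) + (L2/2 + 1 + L1/2) = (3/2)*(T*L1) + (3/2)*(T*L2) + 10*T + L1/2 + L2/2 + 1"
      "(3*T)*(L1+L2+4) = 3*(T*L1) + 3*(T*L2) + 12*T" by (simp_all add: algebra_simps)
    ultimately show ?thesis using assms(8) lin_aux[of L1 L2 "T*L1" "T*L2" T] by simp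
  qed
  finally show ?thesis .
qed

definition goodset :: "nat set \<Rightarrow> (nat \<Rightarrow> int) \<Rightarrow> (nat \<Rightarrow> int) \<Rightarrow> (nat \<Rightarrow> int) \<Rightarrow> int \<Rightarrow> int \<Rightarrow> nat \<Rightarrow> nat \<Rightarrow> (int \<times> int) set" where
  "goodset P c e1 e2 a1 a2 L1 L2 = {t \<in> {a1..<a1+int L1} \<times> {a2..<a2+int L2}.
      \<forall>p\<in>P. \<not> (int p dvd c p * fst t + e1 p \<and> int p dvd c p * snd t + e2 p)}"

lemma card_box_int: "card ({a1..<a1+int L1} \<times> {a2..<a2+int L2}) = L1 * L2"
  by (simp add: card_cartesian_product)

lemma sieve:
  assumes "finite P" "\<forall>p\<in>P. prime p"
  shows "\<forall>c e1 e2 a1 a2 L1 L2. (\<forall>p\<in>P. coprime (c p) (int p)) \<longrightarrow>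
    \<bar>real (card (goodset P c e1 e2 a1 a2 L1 L2)) - real L1 * real L2 * (\<Prod>p\<in>P. 1 - 1/(real p)^2)\<bar>
      \<le> 3 ^ card P * (real L1 + real L2 + 4)"
  using assms
proof (induction P rule: finite_induct)
  case empty
  then show ?case unfolding goodset_def by (simp add: card_box_int)
next
  case (insert p P)
  show ?case
  proof (intro allI impI)
    fix c e1 e2 a1 a2 L1 L2
    assume cop: "\<forall>p'\<in>insert p P. coprime (c p') (int p')"
    have pp: "prime p" using insert by auto
    have p1: "p \<ge> 1" "p \<ge> 2" using prime_ge_2_nat[OF pp] by auto
    have primesP: "\<forall>p\<in>P. prime p" using insert by auto
    obtain x01 M1 where o1: "\<And>x. (x \<in> {a1..<a1 + int L1} \<and> int p dvd c p * x + e1 p) \<longleftrightarrow> (\<exists>s<M1. x = x01 + int p * int s)"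
      "\<bar>real M1 - real L1 / real p\<bar> \<le> 1"
      using oneD_solutions[OF p1(1), of "c p" a1 L1 "e1 p"] cop by auto
    obtain x02 M2 where o2: "\<And>x. (x \<in> {a2..<a2 + int L2} \<and> int p dvd c p * x + e2 p) \<longleftrightarrow> (\<exists>s<M2. x = x02 + int p * int s)"
      "\<bar>real M2 - real L2 / real p\<bar> \<le> 1"
      using oneD_solutions[OF p1(1), of "c p" a2 L2 "e2 p"] cop by auto
    define c' where "c' = (\<lambda>p'. c p' * int p)"
    define e1' where "e1' = (\<lambda>p'. c p' * x01 + e1 p')"
    define e2' where "e2' = (\<lambda>p'. c p' * x02 + e2 p')"
    let ?F = "goodset P c e1 e2 a1 a2 L1 L2"
    let ?X = "{t \<in> ?F. int p dvd c p * fst t + e1 p \<and> int p dvd c p * snd t + e2 p}"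
    let ?F' = "goodset P c' e1' e2' 0 0 M1 M2"
    let ?h = "\<lambda>s::int\<times>int. (x01 + int p * fst s, x02 + int p * snd s)"
    have new: "goodset (insert p P) c e1 e2 a1 a2 L1 L2 = ?F - ?X"
      unfolding goodset_def by auto
    have finF: "finite ?F" unfolding goodset_def by auto
    have cardnew: "card (goodset (insert p P) c e1 e2 a1 a2 L1 L2) = card ?F - card ?X"
      unfolding new using finF by (intro card_Diff_subset) auto
    have XF: "card ?X \<le> card ?F" using finF by (intro card_mono) auto
    have Ximg: "?X = ?h ` ?F'"
    proof (intro equalityI subsetI)
      fix t assume t: "t \<in> ?X"
      obtain t1 t2 where tt: "t = (t1, t2)" by fastforce
      have "t1 \<in> {a1..<a1 + int L1} \<and> int p dvd c p * t1 + e1 p" using t tt unfolding goodset_def by auto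
      then obtain s1 where s1: "s1 < M1" "t1 = x01 + int p * int s1" using o1(1) by blast
      have "t2 \<in> {a2..<a2 + int L2} \<and> int p dvd c p * t2 + e2 p" using t tt unfolding goodset_def by auto
      then obtain s2 where s2: "s2 < M2" "t2 = x02 + int p * int s2" using o2(1) by blast
      have "(int s1, int s2) \<in> ?F'"
        using t tt s1 s2 unfolding goodset_def c'_def e1'_def e2'_def
        by (auto simp: algebra_simps)
      then show "t \<in> ?h ` ?F'" using tt s1 s2 by (intro image_eqI[of _ _ "(int s1, int s2)"]) auto
    next
      fix t assume "t \<in> ?h ` ?F'"
      then obtain s where s: "s \<in> ?F'" "t = ?h s" by blast
      obtain s1 s2 where ss: "s = (s1, s2)" by fastforce
      obtain n1 where n1: "s1 = int n1" "n1 < M1" using s ss unfolding goodset_def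
        by (auto, metis nonneg_int_cases of_nat_less_iff)
      obtain n2 where n2: "s2 = int n2" "n2 < M2" using s ss unfolding goodset_def
        by (auto, metis nonneg_int_cases of_nat_less_iff)
      have A1: "x01 + int p * s1 \<in> {a1..<a1 + int L1} \<and> int p dvd c p * (x01 + int p * s1) + e1 p"
        using o1(1)[of "x01 + int p * s1"] n1 by blast
      have A2: "x02 + int p * s2 \<in> {a2..<a2 + int L2} \<and> int p dvd c p * (x02 + int p * s2) + e2 p"
        using o2(1)[of "x02 + int p * s2"] n2 by blast
      show "t \<in> ?X" using s ss A1 A2 unfolding goodset_def c'_def e1'_def e2'_def
        by (auto simp: algebra_simps)
    qed
    have injh: "inj_on ?h ?F'" using p1 by (intro inj_onI) (auto simp: prod_eq_iff)
    have cardX: "card ?X = card ?F'" unfolding Ximg using injh by (rule card_image)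
    have cop': "\<forall>p'\<in>P. coprime (c' p') (int p')"
    proof
      fix p' assume p': "p' \<in> P"
      have "p' \<noteq> p" using p' insert by auto
      then have "coprime p p'" using pp p' primesP by (simp add: primes_coprime)
      then have "coprime (int p) (int p')" by simp
      moreover have "coprime (c p') (int p')" using cop p' by auto
      ultimately show "coprime (c' p') (int p')" unfolding c'_def by simp
    qed
    have copP: "\<forall>p'\<in>P. coprime (c p') (int p')" using cop by auto
    have IH1: "\<bar>real (card ?F) - real L1 * real L2 * (\<Prod>p\<in>P. 1 - 1/(real p)^2)\<bar>
      \<le> 3 ^ card P * (real L1 + real L2 + 4)"
      using insert.IH[OF primesP] copP by blast
    have IH2: "\<bar>real (card ?F') - real M1 * real M2 * (\<Prod>p\<in>P. 1 - 1/(real p)^2)\<bar>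
      \<le> 3 ^ card P * (real M1 + real M2 + 4)"
      using insert.IH[OF primesP] cop' by blast
    have prodins: "(\<Prod>p\<in>insert p P. 1 - 1/(real p)^2) = (1 - 1/(real p)^2) * (\<Prod>p\<in>P. 1 - 1/(real p)^2)"
      using insert by simp
    have cardins: "(3::real) ^ card (insert p P) = 3 * 3 ^ card P" using insert by simp
    have rho: "0 \<le> (\<Prod>p\<in>P. 1 - 1/(real p)^2)" "(\<Prod>p\<in>P. 1 - 1/(real p)^2) \<le> 1"
    proof -
      have fb: "0 \<le> 1 - 1/(real p')^2 \<and> 1 - 1/(real p')^2 \<le> 1" if "p' \<in> P" for p'
      proof -
        have "real p' \<ge> 2" using prime_ge_2_nat[of p'] primesP that by auto
        then have "1/(real p')^2 \<le> 1" by (simp add: power_le_one_iff)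
        then show ?thesis by simp
      qed
      show "0 \<le> (\<Prod>p\<in>P. 1 - 1/(real p)^2)" using fb by (intro prod_nonneg) auto
      show "(\<Prod>p\<in>P. 1 - 1/(real p)^2) \<le> 1" using fb by (intro prod_le_1) auto
    qed
    have "\<bar>(real (card ?F) - real (card ?F')) - real L1 * real L2 * ((1 - 1/(real p)^2) * (\<Prod>p\<in>P. 1 - 1/(real p)^2))\<bar>
          \<le> (3 * 3 ^ card P) * (real L1 + real L2 + 4)"
      by (rule arith_step[OF IH1 IH2 o1(2) o2(2)]) (use p1 rho in auto)
    then show "\<bar>real (card (goodset (insert p P) c e1 e2 a1 a2 L1 L2)) - real L1 * real L2 * (\<Prod>p\<in>insert p P. 1 - 1/(real p)^2)\<bar>
      \<le> 3 ^ card (insert p P) * (real L1 + real L2 + 4)"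
      unfolding cardnew prodins cardins using XF cardX by (simp add: of_nat_diff)
  qed
qed

definition HH :: "nat \<Rightarrow> real \<Rightarrow> real \<Rightarrow> nat set" where
  "HH K x t = {g \<in> {0..<K}. \<exists>m::int. 0 \<le> real g / K - x - m \<and> real g / K - x - m < t}"

lemma HH_card:
  assumes K: "K \<ge> 1" and t: "0 \<le> t" "t \<le> 1"
  shows "card (HH K x t) \<ge> nat \<lfloor>t * K\<rfloor>"
proof -
  define n where "n = nat \<lfloor>t * K\<rfloor>"
  define c where "c = \<lceil>K * x\<rceil>"
  define f where "f = (\<lambda>s::nat. nat ((c + int s) mod int K))"
  have Kp: "int K > 0" "real K > 0" using K by auto
  have "t * K \<le> K" using t by (simp add: mult_left_le_one_le)
  then have "\<lfloor>t * K\<rfloor> \<le> int K" by linarith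
  then have nK: "n \<le> K" unfolding n_def by simp
  have nt: "real n \<le> t * K" unfolding n_def using t K by simp
  have inj: "inj_on f {0..<n}"
  proof (rule inj_onI)
    fix s s' assume s: "s \<in> {0..<n}" "s' \<in> {0..<n}" "f s = f s'"
    have "(c + int s) mod int K = (c + int s') mod int K"
      using s(3) Kp unfolding f_def by (simp add: nat_eq_iff2)
    then have "[c + int s = c + int s'] (mod int K)" by (simp add: cong_def)
    then have "[int s = int s'] (mod int K)" by (simp add: cong_add_lcancel)
    then have "int s mod int K = int s' mod int K" by (simp add: cong_def)
    then show "s = s'" using s nK by auto
  qed
  have img: "f ` {0..<n} \<subseteq> HH K x t"
  proof
    fix g assume "g \<in> f ` {0..<n}"
    then obtain s where s: "s < n" "g = f s" by auto
    have gm: "int g = (c + int s) mod int K" unfolding s(2) f_def using Kp by simp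
    have gK: "g < K" using gm Kp by (metis of_nat_less_iff pos_mod_bound)
    define m where "m = - ((c + int s) div int K)"
    have geq: "int g = c + int s + int K * m"
      unfolding gm m_def by (simp add: mod_div_mult_eq[symmetric] algebra_simps minus_div_mult_eq_mod[symmetric])
    then have "real g = c + s + K * m" by (metis of_int_add of_int_mult of_int_of_nat_eq)
    then have val: "real g / K - x - m = (c - K*x)/K + s / K" using Kp by (simp add: field_simps)
    have c1: "0 \<le> c - K*x" "c - K*x < 1" unfolding c_def by linarith+
    have "0 \<le> real g / K - x - m" unfolding val using c1 Kp by simp
    moreover have "real g / K - x - m < (1 + s)/K" unfolding val using c1 Kp
      by (simp add: add_divide_distrib[symmetric] divide_strict_right_mono)
    moreover have "(1 + real s)/K \<le> t"
    proof -
      have "1 + real s \<le> n" using s by simp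
      then have "1 + real s \<le> t * K" using nt by linarith
      then show ?thesis using Kp by (simp add: field_simps)
    qed
    ultimately show "g \<in> HH K x t" unfolding HH_def using gK by fastforce
  qed
  have "card (f ` {0..<n}) = n" using card_image[OF inj] by simp
  moreover have "card (f ` {0..<n}) \<le> card (HH K x t)"
    using img by (intro card_mono) (auto simp: HH_def)
  ultimately show ?thesis unfolding n_def by simp
qed

definition dz :: "real \<Rightarrow> real" where "dz x = \<bar>x - of_int (round x)\<bar>"

lemma dz_le: "dz x \<le> \<bar>x - of_int m\<bar>" unfolding dz_def by (rule round_diff_minimal)
lemma dz_half: "dz x \<le> 1/2" unfolding dz_def
  using of_int_round_ge[of x] of_int_round_le[of x] by (simp only: abs_le_iff) linarith
lemma dz_nonneg: "dz x \<ge> 0" unfolding dz_def by simp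

lemma dirichlet2:
  fixes g1 g2 :: real and N :: nat
  assumes N: "N \<ge> 2"
  shows "\<exists>b. 1 \<le> b \<and> b < N \<and> max (dz (b * g1)) (dz (b * g2)) \<le> 1 / sqrt N"
proof -
  define \<delta> where "\<delta> = (\<lambda>b::nat. max (dz (b * g1)) (dz (b * g2)))"
  define t where "t = Min (\<delta> ` {1..<N})"
  have ne: "{1..<N} \<noteq> {}" using N by auto
  have tin: "t \<in> \<delta> ` {1..<N}" unfolding t_def using ne by (intro Min_in) auto
  have tle: "\<And>b. b \<in> {1..<N} \<Longrightarrow> t \<le> \<delta> b" unfolding t_def by (intro Min_le) auto
  obtain b0 where b0: "t = \<delta> b0" using tin by auto
  have t1: "t \<le> 1/2" "t \<ge> 0" unfolding b0 \<delta>_def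
    using dz_half[of "b0*g1"] dz_half[of "b0*g2"] dz_nonneg[of "b0*g1"] by auto
  have "t \<le> 1 / sqrt N"
  proof (rule ccontr)
    assume "\<not> t \<le> 1 / sqrt N"
    then have tgt: "t > 1 / sqrt N" by simp
    have sN: "sqrt N > 0" using N by simp
    define \<epsilon> where "\<epsilon> = sqrt N * t - 1"
    have eps: "\<epsilon> > 0" unfolding \<epsilon>_def using tgt sN by (simp add: field_simps)
    define K where "K = nat \<lceil>sqrt N / \<epsilon>\<rceil> + 1"
    have K1: "K \<ge> 1" unfolding K_def by simp
    have Keps: "K * \<epsilon> > sqrt N"
    proof -
      have "real K > sqrt N / \<epsilon>" unfolding K_def by linarith
      then show ?thesis using eps by (simp add: field_simps)
    qed
    define n where "n = nat \<lfloor>t * K\<rfloor>"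
    have nge: "real n \<ge> t * K - 1" unfolding n_def using t1 by linarith
    have key: "sqrt N * (t * K - 1) > K"
    proof -
      have "sqrt N * (t * K - 1) = K * \<epsilon> + K - sqrt N" unfolding \<epsilon>_def by (simp add: algebra_simps)
      then show ?thesis using Keps by simp
    qed
    have big: "real N * real n ^ 2 > real K ^ 2"
    proof -
      have "sqrt N * (t * K - 1) \<le> sqrt N * real n" using mult_left_mono[OF nge, of "sqrt N"] sN by simp
      then have "real K < sqrt N * real n" using key by linarith
      then have "real K ^ 2 < (sqrt N * real n)^2" using K1
        by (intro power_strict_mono) auto
      also have "\<dots> = real N * real n ^ 2" by (simp add: power_mult_distrib)
      finally show ?thesis .
    qed
    define G where "G = (\<lambda>j::nat. HH K (j * g1) t \<times> HH K (j * g2) t)"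
    have Gcard: "card (G j) \<ge> n^2" for j
    proof -
      have "card (G j) = card (HH K (j * g1) t) * card (HH K (j * g2) t)"
        unfolding G_def by (simp add: card_cartesian_product)
      moreover have "card (HH K (j * g1) t) \<ge> n" "card (HH K (j * g2) t) \<ge> n"
        unfolding n_def using HH_card[OF K1] t1 by auto
      ultimately show ?thesis by (simp add: power2_eq_square mult_le_mono)
    qed
    have Gsub: "G j \<subseteq> {0..<K} \<times> {0..<K}" for j unfolding G_def HH_def by auto
    have "\<not> disjoint_family_on G {0..<N}"
    proof
      assume disj: "disjoint_family_on G {0..<N}"
      have "card (\<Union>j\<in>{0..<N}. G j) = (\<Sum>j\<in>{0..<N}. card (G j))"
        using disj by (intro card_UN_disjoint) (auto simp: disjoint_family_on_def intro: finite_subset[OF Gsub])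
      also have "\<dots> \<ge> N * n^2" using sum_bounded_below[of "{0..<N}" "n^2" "\<lambda>j. card (G j)"] Gcard by simp
      finally have c1: "card (\<Union>j\<in>{0..<N}. G j) \<ge> N * n^2" .
      have "card (\<Union>j\<in>{0..<N}. G j) \<le> card ({0..<K} \<times> {0..<K})"
        using Gsub by (intro card_mono) auto
      then have "N * n^2 \<le> K^2" using c1 by (simp add: card_cartesian_product power2_eq_square)
      then have "real (N * n^2) \<le> real (K^2)" by (simp only: of_nat_le_iff)
      then have "real N * real n^2 \<le> real K^2" by simp
      then show False using big by simp
    qed
    then obtain i j where ij: "i \<in> {0..<N}" "j \<in> {0..<N}" "i \<noteq> j" "G i \<inter> G j \<noteq> {}"
      unfolding disjoint_family_on_def by blast
    have close: "\<delta> (nat \<bar>int i - int j\<bar>) < t" if ij': "i \<in> {0..<N}" "j \<in> {0..<N}" "i < j" "G i \<inter> G j \<noteq> {}" for i j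
    proof -
      obtain x1 x2 where x: "(x1,x2) \<in> G i" "(x1,x2) \<in> G j" using ij'(4) by auto
      have c: "dz (real (j - i) * gg) < t" if h: "x \<in> HH K (i * gg) t" "x \<in> HH K (j * gg) t" for x and gg :: real
      proof -
        obtain m :: int where m: "0 \<le> real x / K - i * gg - m" "real x / K - i * gg - m < t" using h(1) unfolding HH_def by auto
        obtain m' :: int where m': "0 \<le> real x / K - j * gg - m'" "real x / K - j * gg - m' < t" using h(2) unfolding HH_def by auto
        have "real (j - i) * gg - of_int (m - m') = (real x / K - i * gg - m) - (real x / K - j * gg - m')"
          using ij'(3) by (simp add: of_nat_diff algebra_simps)
        then have "\<bar>real (j - i) * gg - of_int (m - m')\<bar> < t" using m m' by linarith
        then show ?thesis using dz_le[of "real (j - i) * gg" "m - m'"] by linarith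
      qed
      have "dz (real (j - i) * g1) < t" "dz (real (j - i) * g2) < t"
        using x c unfolding G_def by auto
      moreover have "nat \<bar>int i - int j\<bar> = j - i" using ij'(3) by simp
      ultimately show ?thesis unfolding \<delta>_def by simp
    qed
    have "\<delta> (nat \<bar>int i - int j\<bar>) < t"
    proof (cases "i < j")
      case True then show ?thesis using close ij by blast
    next
      case False then have "j < i" using ij by simp
      then have "\<delta> (nat \<bar>int j - int i\<bar>) < t" using close[of j i] ij by (simp add: Int_commute)
      then show ?thesis by (simp add: abs_minus_commute)
    qed
    moreover have "nat \<bar>int i - int j\<bar> \<in> {1..<N}" using ij by auto
    ultimately show False using tle by fastforce
  qed
  then show ?thesis using tin unfolding \<delta>_def by auto
qed

lemma gcd3_char:
  fixes D q :: nat and C1 C2 x1 x2 :: int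
  assumes D: "D \<ge> 1" and q: "q \<ge> 1"
    and cp: "\<forall>p::nat. prime p \<longrightarrow> int p dvd int D \<longrightarrow> \<not> (int p dvd C1 \<and> int p dvd C2)"
  shows "gcd (gcd (int D * x1 + C1) (int D * x2 + C2)) (int D * int q) = 1 \<longleftrightarrow>
         (\<forall>p\<in>{p. prime p \<and> p dvd q \<and> \<not> p dvd D}. \<not> (int p dvd int D * x1 + C1 \<and> int p dvd int D * x2 + C2))"
proof
  assume g: "gcd (gcd (int D * x1 + C1) (int D * x2 + C2)) (int D * int q) = 1"
  show "\<forall>p\<in>{p. prime p \<and> p dvd q \<and> \<not> p dvd D}. \<not> (int p dvd int D * x1 + C1 \<and> int p dvd int D * x2 + C2)"
  proof (intro ballI notI)
    fix p assume p: "p \<in> {p. prime p \<and> p dvd q \<and> \<not> p dvd D}" and d: "int p dvd int D * x1 + C1 \<and> int p dvd int D * x2 + C2"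
    have "int p dvd int D * int q" using p by auto
    then have "int p dvd 1" using d g by (metis gcd_greatest)
    then show False using p by (auto simp: prime_ge_2_nat)
  qed
next
  assume h: "\<forall>p\<in>{p. prime p \<and> p dvd q \<and> \<not> p dvd D}. \<not> (int p dvd int D * x1 + C1 \<and> int p dvd int D * x2 + C2)"
  let ?g = "gcd (gcd (int D * x1 + C1) (int D * x2 + C2)) (int D * int q)"
  show "?g = 1"
  proof (rule ccontr)
    assume ne: "?g \<noteq> 1"
    have nz: "?g \<noteq> 0" using D q by auto
    have "\<not> is_unit ?g" using ne by (simp add: is_unit_gcd_iff)
    then obtain b where b: "b dvd ?g" "prime b" using prime_divisor_exists[OF nz] by blast
    define p where "p = nat b"
    have bp: "b = int p" unfolding p_def using b(2) by (simp add: prime_ge_0_int)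
    have pp: "prime p" unfolding p_def using b(2) by simp
    have d1: "int p dvd int D * x1 + C1" "int p dvd int D * x2 + C2" "int p dvd int D * int q"
      using b(1) bp by (auto intro: dvd_trans)
    show False
    proof (cases "int p dvd int D")
      case True
      then have "int p dvd C1" "int p dvd C2" using d1 by (auto simp: dvd_add_right_iff)
      then show False using cp pp True by blast
    next
      case False
      then have "int p dvd int q" using d1(3) pp by (simp add: prime_dvd_mult_iff)
      then have "p \<in> {p. prime p \<and> p dvd q \<and> \<not> p dvd D}" using pp False by auto
      then show False using h d1 by blast
    qed
  qed
qed

lemma dvd_mod_shift:
  fixes p q :: nat and u C :: int and D :: int
  assumes "p dvd q"
  shows "int p dvd D * (u mod int q) + C \<longleftrightarrow> int p dvd D * u + C"
proof -
  have "int p dvd int q" using assms by simp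
  then have "(u mod int q) mod int p = u mod int p" by (simp add: mod_mod_cancel)
  then have "[u mod int q = u] (mod int p)" by (simp add: cong_def)
  then have "[D * (u mod int q) + C = D * u + C] (mod int p)" by (intro cong_add cong_mult) auto
  then show ?thesis by (simp add: cong_dvd_iff)
qed

lemma approx_reduce:
  fixes p B :: nat and A1 A2 :: int
  assumes "p \<ge> 1" "int p dvd int B" "int p dvd A1" "int p dvd A2"
  shows "approx \<gamma> (A1 div int p, A2 div int p) (B div p) = approx \<gamma> (A1, A2) B"
proof -
  obtain B' where B': "B = p * B'" using assms(2) by (metis dvd_def int_dvd_int_iff)
  obtain a1 where a1: "A1 = int p * a1" using assms(3) by (metis dvd_def)
  obtain a2 where a2: "A2 = int p * a2" using assms(4) by (metis dvd_def)
  have p0: "real p \<noteq> 0" using assms(1) by simp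
  have "B div p = B'" using B' assms(1) by simp
  moreover have "A1 div int p = a1" "A2 div int p = a2" using a1 a2 assms(1) by simp_all
  ultimately show ?thesis unfolding approx_def B' a1 a2 using p0 by simp
qed

lemma approx_round:
  fixes b :: nat and \<gamma> :: "real \<times> real" assumes "b \<ge> 1"
  shows "approx \<gamma> (round (b * fst \<gamma>), round (b * snd \<gamma>)) b = max (dz (b * fst \<gamma>)) (dz (b * snd \<gamma>)) / b"
proof -
  have bp: "real b > 0" using assms by simp
  have e: "\<bar>x - of_int r / real b\<bar> = \<bar>b * x - of_int r\<bar> / b" for x :: real and r
  proof -
    have "x - of_int r / real b = (b * x - of_int r) / b" using bp by (simp add: field_simps)
    then show ?thesis using bp by simp
  qed
  show ?thesis unfolding approx_def maxnorm_def dz_def using bp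
    by (simp add: e max_divide_distrib_right)
qed

lemma BB_props:
  shows "1 \<le> BB \<gamma> k" "\<And>B' A'. 1 \<le> B' \<Longrightarrow> approx \<gamma> A' B' < 1 / 2 ^ k \<Longrightarrow> BB \<gamma> k \<le> B'"
proof -
  define B0 :: nat where "B0 = 2 ^ k"
  have B01: "B0 \<ge> 1" unfolding B0_def by simp
  have "approx \<gamma> (round (B0 * fst \<gamma>), round (B0 * snd \<gamma>)) B0 < 1 / 2 ^ k"
  proof -
    have "max (dz (B0 * fst \<gamma>)) (dz (B0 * snd \<gamma>)) / B0 \<le> (1/2) / B0"
      using dz_half[of "B0 * fst \<gamma>"] dz_half[of "B0 * snd \<gamma>"] B01 by (intro divide_right_mono) auto
    also have "\<dots> < 1 / 2 ^ k" unfolding B0_def by (simp add: divide_strict_left_mono)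
    finally show ?thesis using approx_round[OF B01] by simp
  qed
  then have ex: "1 \<le> B0 \<and> (\<exists>A. approx \<gamma> A B0 < 1 / 2 ^ k)" using B01 by blast
  show "1 \<le> BB \<gamma> k" unfolding BB_def using LeastI[of "\<lambda>B. 1 \<le> B \<and> (\<exists>A. approx \<gamma> A B < 1 / 2 ^ k)" B0, OF ex] by blast
  show "\<And>B' A'. 1 \<le> B' \<Longrightarrow> approx \<gamma> A' B' < 1 / 2 ^ k \<Longrightarrow> BB \<gamma> k \<le> B'"
    unfolding BB_def by (intro Least_le) blast
qed

lemma BB_coprime:
  assumes "approx \<gamma> (A k) (BB \<gamma> k) < 1 / 2 ^ k"
  shows "\<forall>p::nat. prime p \<longrightarrow> int p dvd int (BB \<gamma> k) \<longrightarrow> \<not> (int p dvd fst (A k) \<and> int p dvd snd (A k))"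
proof (intro allI impI notI)
  fix p :: nat assume p: "prime p" "int p dvd int (BB \<gamma> k)" "int p dvd fst (A k) \<and> int p dvd snd (A k)"
  have p2: "p \<ge> 2" using p(1) prime_ge_2_nat by blast
  let ?B = "BB \<gamma> k"
  have B1: "?B \<ge> 1" using BB_props(1) .
  have pd: "p dvd ?B" using p(2) by simp
  obtain m where m: "?B = p * m" using pd by (auto simp: dvd_def)
  have "m \<noteq> 0" using m B1 by auto
  moreover have "?B div p = m" using m p2 by simp
  ultimately have "?B div p \<ge> 1" by simp
  moreover have "approx \<gamma> (fst (A k) div int p, snd (A k) div int p) (?B div p) < 1 / 2 ^ k"
    using approx_reduce[of p ?B "fst (A k)" "snd (A k)" \<gamma>] p p2 assms by simp
  ultimately have "?B \<le> ?B div p" using BB_props(2) by blast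
  moreover have "?B div p < ?B" using B1 p2 by simp
  ultimately show False by simp
qed

lemma bb_props:
  assumes B2: "BB \<gamma> k \<ge> 2"
  shows "1 \<le> bb \<gamma> k" "bb \<gamma> k < BB \<gamma> k"
    "\<And>b' a'. 1 \<le> b' \<Longrightarrow> b' < BB \<gamma> k \<Longrightarrow> approx \<gamma> a' b' \<le> 1 / (real b' * sqrt (real (BB \<gamma> k))) \<Longrightarrow> bb \<gamma> k \<le> b'"
proof -
  let ?N = "BB \<gamma> k"
  let ?P = "\<lambda>b::nat. 1 \<le> b \<and> b < ?N \<and> (\<exists>a. approx \<gamma> a b \<le> 1 / (real b * sqrt (real ?N)))"
  obtain b where b: "1 \<le> b" "b < ?N" "max (dz (b * fst \<gamma>)) (dz (b * snd \<gamma>)) \<le> 1 / sqrt ?N"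
    using dirichlet2[OF B2] by blast
  have "approx \<gamma> (round (b * fst \<gamma>), round (b * snd \<gamma>)) b \<le> 1 / (real b * sqrt (real ?N))"
  proof -
    have "approx \<gamma> (round (b * fst \<gamma>), round (b * snd \<gamma>)) b = max (dz (b * fst \<gamma>)) (dz (b * snd \<gamma>)) / b"
      using approx_round[OF b(1)] by simp
    also have "\<dots> \<le> (1 / sqrt ?N) / b" using b by (intro divide_right_mono) auto
    finally show ?thesis by (simp add: mult.commute)
  qed
  then have ex: "?P b" using b by blast
  have Pbb: "?P (bb \<gamma> k)" unfolding bb_def using LeastI[of ?P b, OF ex] .
  then show "1 \<le> bb \<gamma> k" "bb \<gamma> k < BB \<gamma> k" by auto
  show "\<And>b' a'. 1 \<le> b' \<Longrightarrow> b' < BB \<gamma> k \<Longrightarrow> approx \<gamma> a' b' \<le> 1 / (real b' * sqrt (real (BB \<gamma> k))) \<Longrightarrow> bb \<gamma> k \<le> b'"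
    unfolding bb_def by (intro Least_le) blast
qed

lemma bb_coprime:
  assumes B2: "BB \<gamma> k \<ge> 2" and ap: "approx \<gamma> (a k) (bb \<gamma> k) \<le> 1 / (real (bb \<gamma> k) * sqrt (real (BB \<gamma> k)))"
  shows "\<forall>p::nat. prime p \<longrightarrow> int p dvd int (bb \<gamma> k) \<longrightarrow> \<not> (int p dvd fst (a k) \<and> int p dvd snd (a k))"
proof (intro allI impI notI)
  fix p :: nat assume p: "prime p" "int p dvd int (bb \<gamma> k)" "int p dvd fst (a k) \<and> int p dvd snd (a k)"
  have p2: "p \<ge> 2" using p(1) prime_ge_2_nat by blast
  let ?b = "bb \<gamma> k"
  have b1: "?b \<ge> 1" "?b < BB \<gamma> k" using bb_props[OF B2] by auto
  have pd: "p dvd ?b" using p(2) by simp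
  obtain m where m: "?b = p * m" using pd by (auto simp: dvd_def)
  have "m \<noteq> 0" using m b1 by auto
  moreover have bm: "?b div p = m" using m p2 by simp
  ultimately have m1: "?b div p \<ge> 1" by simp
  have mlt: "?b div p < ?b" using b1 p2 by simp
  have "approx \<gamma> (fst (a k) div int p, snd (a k) div int p) (?b div p) = approx \<gamma> (a k) ?b"
    using approx_reduce[of p ?b "fst (a k)" "snd (a k)" \<gamma>] p p2 by simp
  also have "\<dots> \<le> 1 / (real ?b * sqrt (real (BB \<gamma> k)))" using ap .
  also have "\<dots> \<le> 1 / (real (?b div p) * sqrt (real (BB \<gamma> k)))"
    using m1 mlt B2 by (intro divide_left_mono mult_right_mono) auto
  finally have "?b \<le> ?b div p" using bb_props(3)[OF B2] m1 mlt b1 by (meson order_less_trans)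
  then show False using mlt by simp
qed

lemma Sq_form:
  assumes S: "setting \<gamma> \<sigma> K0 \<psi> A a"
  shows "\<exists>D C1 C2. D \<ge> 1 \<and> (\<forall>p::nat. prime p \<longrightarrow> int p dvd int D \<longrightarrow> \<not> (int p dvd C1 \<and> int p dvd C2)) \<and>
     Sq \<gamma> \<sigma> A a \<psi> q = {u \<in> {0..<int q} \<times> {0..<int q}. gcd3 (int D * fst u + C1, int D * snd u + C2) (int D * int q) = 1}"
proof -
  let ?k = "kk \<psi> q"
  show ?thesis
  proof (cases "real (BB \<gamma> ?k) \<le> 2 powr (\<sigma> * real ?k)")
    case True
    have "approx \<gamma> (A ?k) (BB \<gamma> ?k) < 1 / 2 ^ ?k" using S unfolding setting_def by blast
    then have cp: "\<forall>p::nat. prime p \<longrightarrow> int p dvd int (BB \<gamma> ?k) \<longrightarrow> \<not> (int p dvd fst (A ?k) \<and> int p dvd snd (A ?k))"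
      by (rule BB_coprime)
    show ?thesis
      by (rule exI[of _ "BB \<gamma> ?k"], rule exI[of _ "fst (A ?k)"], rule exI[of _ "snd (A ?k)"])
         (use cp BB_props(1) True in \<open>simp add: Sq_def Let_def\<close>)
  next
    case False
    have "\<sigma> > 0" using S unfolding setting_def by blast
    then have "\<sigma> * real ?k \<ge> 0" by simp
    then have "2 powr (\<sigma> * real ?k) \<ge> 1" by (simp add: ge_one_powr_ge_zero)
    then have B2: "BB \<gamma> ?k \<ge> 2" using False by linarith
    have "approx \<gamma> (a ?k) (bb \<gamma> ?k) \<le> 1 / (real (bb \<gamma> ?k) * sqrt (real (BB \<gamma> ?k)))"
      using S B2 unfolding setting_def by blast
    then have cp: "\<forall>p::nat. prime p \<longrightarrow> int p dvd int (bb \<gamma> ?k) \<longrightarrow> \<not> (int p dvd fst (a ?k) \<and> int p dvd snd (a ?k))"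
      by (rule bb_coprime[OF B2])
    show ?thesis
      by (rule exI[of _ "bb \<gamma> ?k"], rule exI[of _ "fst (a ?k)"], rule exI[of _ "snd (a ?k)"])
         (use cp bb_props(1)[OF B2] False in \<open>simp add: Sq_def Let_def\<close>)
  qed
qed

lemma card_cong_interval:
  fixes p q :: nat and a :: int and S :: "int set"
  assumes p: "p \<ge> 1" "p dvd q" and S: "S \<subseteq> {a..<a + int q}"
    and c: "\<And>x y. x \<in> S \<Longrightarrow> y \<in> S \<Longrightarrow> [x = y] (mod int p)"
  shows "card S \<le> q div p"
proof -
  define f where "f = (\<lambda>x. nat ((x - a) div int p))"
  have pp: "int p > 0" using p by simp
  obtain m where m: "q = p * m" using p(2) by (auto simp: dvd_def)
  have qm: "q div p = m" using m p by simp
  have inj: "inj_on f S"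
  proof (rule inj_onI)
    fix x y assume xy: "x \<in> S" "y \<in> S" "f x = f y"
    have nn: "(x - a) div int p \<ge> 0" "(y - a) div int p \<ge> 0" using xy S pp by (auto simp: pos_imp_zdiv_nonneg_iff)
    then have dq: "(x - a) div int p = (y - a) div int p" using xy(3) unfolding f_def by simp
    have "[x - a = y - a] (mod int p)" using c[OF xy(1,2)] by (simp add: cong_diff)
    then have mq: "(x - a) mod int p = (y - a) mod int p" by (simp add: cong_def)
    have "x - a = y - a" using dq mq by (metis div_mult_mod_eq)
    then show "x = y" by simp
  qed
  have img: "f ` S \<subseteq> {0..<m}"
  proof
    fix z assume "z \<in> f ` S"
    then obtain x where x: "x \<in> S" "z = f x" by auto
    have "x - a < int p * int m" using x S m by auto
    then have "\<not> int m * int p \<le> x - a" by (simp add: mult.commute)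
    then have "\<not> int m \<le> (x - a) div int p" using zle_div_iff'[OF pp, of "int m" "x - a"] by blast
    then have "(x - a) div int p < int m" by simp
    moreover have "(x - a) div int p \<ge> 0" using x S pp by (auto simp: pos_imp_zdiv_nonneg_iff)
    ultimately show "z \<in> {0..<m}" using x unfolding f_def by (simp add: nat_less_iff)
  qed
  have "card S = card (f ` S)" using card_image[OF inj] by simp
  also have "\<dots> \<le> m" using card_mono[OF _ img] by simp
  finally show ?thesis using qm by simp
qed


lemma sum_inv_sq_aux: "N \<ge> 2 \<Longrightarrow> (\<Sum>n\<in>{2..N}. 1 / (real n)^2) \<le> 3/4 - 1 / real N"
proof (induction N rule: nat_induct_at_least)
  case base then show ?case by (simp add: numeral_2_eq_2)
next
  case (Suc n)
  have "{2..Suc n} = insert (Suc n) {2..n}" using Suc by auto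
  then have "(\<Sum>k\<in>{2..Suc n}. 1 / (real k)^2) = 1 / (real (Suc n))^2 + (\<Sum>k\<in>{2..n}. 1 / (real k)^2)" by simp
  also have "\<dots> \<le> 1 / (real (Suc n))^2 + (3/4 - 1 / real n)" using Suc by simp
  also have "\<dots> \<le> 3/4 - 1 / real (Suc n)"
  proof -
    have n: "real n \<ge> 2" using Suc by simp
    have "1 / (real (Suc n))^2 \<le> 1 / real n - 1 / real (Suc n)"
    proof -
      have "1 / real n - 1 / real (Suc n) = 1 / (real n * real (Suc n))" using n by (simp add: field_simps)
      also have "\<dots> \<ge> 1 / (real (Suc n))^2" using n by (intro divide_left_mono) (auto simp: power2_eq_square)
      finally show ?thesis .
    qed
    then show ?thesis by simp
  qed
  finally show ?case .
qed

lemma sum_inv_sq: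
  assumes "P \<subseteq> {2..N}"
  shows "(\<Sum>n\<in>P. 1 / (real n)^2) \<le> 3/4"
proof (cases "N \<ge> 2")
  case True
  have "(\<Sum>n\<in>P. 1 / (real n)^2) \<le> (\<Sum>n\<in>{2..N}. 1 / (real n)^2)"
    using assms by (intro sum_mono2) auto
  also have "\<dots> \<le> 3/4 - 1 / real N" using sum_inv_sq_aux[OF True] .
  also have "\<dots> \<le> 3/4" by simp
  finally show ?thesis .
next
  case False
  then have "P = {}" using assms by auto
  then show ?thesis by simp
qed

lemma weierstrass_prod:
  fixes f :: "'a \<Rightarrow> real"
  assumes "finite A" "\<And>x. x \<in> A \<Longrightarrow> 0 \<le> f x \<and> f x \<le> 1"
  shows "(\<Prod>x\<in>A. 1 - f x) \<ge> 1 - (\<Sum>x\<in>A. f x)"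
  using assms
proof (induction A rule: finite_induct)
  case empty then show ?case by simp
next
  case (insert a A)
  have fa: "0 \<le> f a" "f a \<le> 1" using insert by auto
  have IH: "(\<Prod>x\<in>A. 1 - f x) \<ge> 1 - (\<Sum>x\<in>A. f x)" using insert by auto
  have S: "(\<Sum>x\<in>A. f x) \<ge> 0" using insert by (intro sum_nonneg) auto
  have "(\<Prod>x\<in>insert a A. 1 - f x) = (1 - f a) * (\<Prod>x\<in>A. 1 - f x)" using insert by simp
  also have "\<dots> \<ge> (1 - f a) * (1 - (\<Sum>x\<in>A. f x))" using IH fa by (intro mult_left_mono) auto
  finally have "(\<Prod>x\<in>insert a A. 1 - f x) \<ge> (1 - f a) * (1 - (\<Sum>x\<in>A. f x))" .
  moreover have "(1 - f a) * (1 - (\<Sum>x\<in>A. f x)) \<ge> 1 - (f a + (\<Sum>x\<in>A. f x))"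
    using fa S by (simp add: algebra_simps)
  ultimately show ?case using insert by simp
qed

lemma rho_lower:
  assumes "P \<subseteq> {2..N}"
  shows "(\<Prod>p\<in>P. 1 - 1/(real p)^2) \<ge> 1/4"
proof -
  have fin: "finite P" using assms finite_subset by blast
  have "(\<Prod>p\<in>P. 1 - 1/(real p)^2) \<ge> 1 - (\<Sum>p\<in>P. 1/(real p)^2)"
  proof (rule weierstrass_prod[OF fin])
    fix x assume "x \<in> P"
    then have "real x \<ge> 2" using assms by auto
    then show "0 \<le> 1 / (real x)^2 \<and> 1 / (real x)^2 \<le> 1" by (simp add: power_le_one_iff)
  qed
  then show ?thesis using sum_inv_sq[OF assms] by linarith
qed

lemma rho_upper:
  assumes "P \<subseteq> {2..N}"
  shows "(\<Prod>p\<in>P. 1 - 1/(real p)^2) \<le> 1"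
proof (rule prod_le_1)
  fix x assume "x \<in> P"
  then have "real x \<ge> 2" using assms by auto
  then show "0 \<le> 1 - 1 / (real x)^2 \<and> 1 - 1 / (real x)^2 \<le> 1" by (simp add: power_le_one_iff)
qed


lemma full_period:
  fixes D C1 C2 a1 a2 :: int
  assumes q: "q \<ge> 1" and P: "P \<subseteq> {p. prime p \<and> p dvd q}" and cop: "\<forall>p\<in>P. coprime D (int p)"
  shows "real (card (goodset P (\<lambda>_. D) (\<lambda>_. C1) (\<lambda>_. C2) a1 a2 q q)) \<ge> real q ^ 2 / 4"
proof -
  let ?J = "{a1..<a1+int q} \<times> {a2..<a2+int q}"
  let ?G = "goodset P (\<lambda>_. D) (\<lambda>_. C1) (\<lambda>_. C2) a1 a2 q q"
  define Y1 where "Y1 = (\<lambda>p::nat. {x \<in> {a1..<a1+int q}. int p dvd D * x + C1})"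
  define Y2 where "Y2 = (\<lambda>p::nat. {x \<in> {a2..<a2+int q}. int p dvd D * x + C2})"
  have finP: "finite P" using P q by (intro finite_subset[of P "{..q}"]) (auto intro: dvd_imp_le)
  have P2: "P \<subseteq> {2..q}"
  proof
    fix x assume "x \<in> P"
    then have "prime x" "x dvd q" using P by auto
    then show "x \<in> {2..q}" using q prime_ge_2_nat[of x] dvd_imp_le[of x q] by auto
  qed
  have GJ: "?G \<subseteq> ?J" unfolding goodset_def by auto
  have JG: "?J - ?G \<subseteq> (\<Union>p\<in>P. Y1 p \<times> Y2 p)"
    unfolding goodset_def Y1_def Y2_def by auto
  have Ycard: "card (Y1 p \<times> Y2 p) \<le> (q div p)^2" if p: "p \<in> P" for p
  proof -
    have pp: "prime p" "p dvd q" using P p by auto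
    have p1: "p \<ge> 1" using prime_ge_2_nat[OF pp(1)] by simp
    have cp: "coprime D (int p)" using cop p by auto
    have cg: "[x = y] (mod int p)" if "int p dvd D * x + C" "int p dvd D * y + C" for x y C
    proof -
      have "int p dvd D * (x - y)" using that dvd_diff[OF that] by (simp add: algebra_simps)
      then have "int p dvd x - y" using cp by (metis coprime_commute coprime_dvd_mult_right_iff)
      then show ?thesis by (simp add: cong_iff_dvd_diff)
    qed
    have "card (Y1 p) \<le> q div p" using p1 pp(2) by (intro card_cong_interval) (auto simp: Y1_def intro: cg)
    moreover have "card (Y2 p) \<le> q div p" using p1 pp(2) by (intro card_cong_interval) (auto simp: Y2_def intro: cg)
    ultimately show ?thesis by (simp add: card_cartesian_product power2_eq_square mult_le_mono)
  qed
  have finY: "finite (Y1 p \<times> Y2 p)" for p unfolding Y1_def Y2_def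
    by (intro finite_cartesian_product; rule finite_subset[OF _ finite_atLeastLessThan_int]) auto
  have "card (?J - ?G) \<le> card (\<Union>p\<in>P. Y1 p \<times> Y2 p)"
    using JG finP finY by (intro card_mono) auto
  also have "\<dots> \<le> (\<Sum>p\<in>P. card (Y1 p \<times> Y2 p))" by (rule card_UN_le[OF finP])
  finally have "real (card (?J - ?G)) \<le> real (\<Sum>p\<in>P. card (Y1 p \<times> Y2 p))"
    by (simp only: of_nat_le_iff)
  then have c1: "real (card (?J - ?G)) \<le> (\<Sum>p\<in>P. real (card (Y1 p \<times> Y2 p)))"
    by (simp only: of_nat_sum)
  also have "\<dots> \<le> (\<Sum>p\<in>P. real q ^ 2 * (1 / (real p)^2))"
  proof (rule sum_mono)
    fix p assume p: "p \<in> P"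
    have "real (card (Y1 p \<times> Y2 p)) \<le> real ((q div p)^2)" using Ycard[OF p] by (simp only: of_nat_le_iff)
    also have "\<dots> = (real (q div p))^2" by simp
    also have "\<dots> = (real q / real p)^2" using P p by (auto simp: real_of_nat_div)
    also have "\<dots> = real q ^ 2 * (1 / (real p)^2)" by (simp add: power_divide)
    finally show "real (card (Y1 p \<times> Y2 p)) \<le> real q ^ 2 * (1 / (real p)^2)" .
  qed
  also have "\<dots> = real q ^ 2 * (\<Sum>p\<in>P. 1 / (real p)^2)" by (simp add: sum_distrib_left)
  also have "\<dots> \<le> real q ^ 2 * (3/4)" using sum_inv_sq[OF P2] by (intro mult_left_mono) auto
  finally have c2: "real (card (?J - ?G)) \<le> real q ^ 2 * (3/4)" .
  have "card ?J = q * q" by (simp add: card_cartesian_product)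
  moreover have "card (?J - ?G) = card ?J - card ?G" using GJ by (intro card_Diff_subset) (auto intro: finite_subset)
  moreover have "card ?G \<le> card ?J" using GJ by (intro card_mono) auto
  ultimately have "real (card ?G) = real q ^ 2 - real (card (?J - ?G))" by (simp add: of_nat_diff power2_eq_square)
  then show ?thesis using c2 by simp
qed

lemma prod_primes_dvd:
  assumes "finite P" "\<forall>p\<in>P. prime p \<and> p dvd (q::nat)"
  shows "(\<Prod>P) dvd q"
  using assms
proof (induction P rule: finite_induct)
  case empty then show ?case by simp
next
  case (insert p P)
  have pp: "prime p" "p dvd q" using insert by auto
  have "\<not> p dvd \<Prod>P"
  proof
    assume "p dvd \<Prod>P"
    then obtain x where x: "x \<in> P" "p dvd x" using prime_dvd_prod_iff[OF insert(1) pp(1)] by auto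
    then have "prime x" using insert by auto
    then have "p = x" using x(2) pp(1) by (simp add: primes_dvd_imp_eq)
    then show False using x insert by auto
  qed
  then have "coprime p (\<Prod>P)" using pp(1) by (simp add: prime_imp_coprime)
  moreover have "(\<Prod>P) dvd q" using insert by auto
  ultimately show ?case using insert pp(2) by (simp add: divides_mult)
qed

lemma three_pow_bound:
  assumes q: "q \<ge> 1" and P: "P \<subseteq> {p. prime p \<and> p dvd q}"
  shows "(3::real) ^ card P \<le> 3^9 * sqrt (real q)"
proof -
  have finP: "finite P" using P q by (intro finite_subset[of P "{..q}"]) (auto intro: dvd_imp_le)
  let ?S = "{p\<in>P. p < 9}" and ?L = "{p\<in>P. \<not> p < 9}"
  have PSL: "P = ?S \<union> ?L" "?S \<inter> ?L = {}" by auto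
  have cS: "card ?S \<le> 9" using card_mono[of "{..<9}" ?S] by auto
  have cP: "card P = card ?S + card ?L" using finP by (subst PSL(1), intro card_Un_disjoint) auto
  have "(9::real) ^ card ?L \<le> (\<Prod>p\<in>?L. real p)"
  proof -
    have "(9::real) ^ card ?L = (\<Prod>p\<in>?L. 9)" by simp
    also have "\<dots> \<le> (\<Prod>p\<in>?L. real p)" by (intro prod_mono) auto
    finally show ?thesis .
  qed
  also have "\<dots> \<le> (\<Prod>p\<in>P. real p)"
  proof -
    have "(\<Prod>p\<in>P. real p) = (\<Prod>p\<in>?S. real p) * (\<Prod>p\<in>?L. real p)"
      using finP by (subst PSL(1), intro prod.union_disjoint) auto
    moreover have "(\<Prod>p\<in>?S. real p) \<ge> 1"
    proof (intro prod_ge_1)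
      fix x assume "x \<in> ?S"
      then have "prime x" using P by auto
      then show "1 \<le> real x" using prime_ge_1_nat[of x] by simp
    qed
    moreover have "(\<Prod>p\<in>?L. real p) \<ge> 0" by (intro prod_nonneg) auto
    ultimately show ?thesis by (metis mult_le_cancel_right1 order_less_le not_less)
  qed
  also have "\<dots> = real (\<Prod>P)" by simp
  also have "\<dots> \<le> real q"
  proof -
    have dv: "\<Prod>P dvd q" using prod_primes_dvd[OF finP] P by auto
    have "\<Prod>P \<le> q" using dvd_imp_le[OF dv] q by simp
    then show ?thesis by (simp only: of_nat_le_iff)
  qed
  finally have L: "(9::real) ^ card ?L \<le> real q" .
  have "((3::real) ^ card P)^2 = 9 ^ card ?S * 9 ^ card ?L"
    unfolding cP by (simp add: power_add power_mult_distrib flip: power_mult) (simp add: power_mult mult.commute)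
  also have "\<dots> \<le> 9^9 * real q"
  proof -
    have "(9::real) ^ card ?S \<le> 9 ^ 9" using cS by (intro power_increasing) auto
    then show ?thesis using L by (intro mult_mono) auto
  qed
  finally have "((3::real) ^ card P)^2 \<le> 9^9 * real q" .
  then have "(3::real) ^ card P \<le> sqrt (9^9 * real q)" by (simp add: real_le_rsqrt)
  also have "\<dots> = 3^9 * sqrt (real q)" by (simp add: real_sqrt_mult)
  finally show ?thesis .
qed

lemma distZ2_props:
  fixes x :: "real \<times> real"
  shows "distZ2 x \<ge> 0" "distZ2 x < e \<longleftrightarrow> (\<exists>m1 m2::int. maxnorm (x - (real_of_int m1, real_of_int m2)) < e)"
proof -
  let ?S = "{maxnorm (x - (real_of_int m1, real_of_int m2)) | m1 m2. True}"
  have ne: "?S \<noteq> {}" by blast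
  have nn: "\<And>y. y \<in> ?S \<Longrightarrow> 0 \<le> y" unfolding maxnorm_def by auto
  have bdd: "bdd_below ?S" using nn by (intro bdd_belowI) blast
  show "distZ2 x \<ge> 0" unfolding distZ2_def using ne nn by (intro cInf_greatest) auto
  show "distZ2 x < e \<longleftrightarrow> (\<exists>m1 m2::int. maxnorm (x - (real_of_int m1, real_of_int m2)) < e)"
  proof
    assume "distZ2 x < e"
    then obtain y where "y \<in> ?S" "y < e" unfolding distZ2_def using cInf_lessD[OF ne] by blast
    then show "\<exists>m1 m2::int. maxnorm (x - (real_of_int m1, real_of_int m2)) < e" by blast
  next
    assume "\<exists>m1 m2::int. maxnorm (x - (real_of_int m1, real_of_int m2)) < e"
    then obtain m1 m2 :: int where m: "maxnorm (x - (real_of_int m1, real_of_int m2)) < e" by blast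
    have "distZ2 x \<le> maxnorm (x - (real_of_int m1, real_of_int m2))"
      unfolding distZ2_def using bdd by (intro cInf_lower) blast+
    then show "distZ2 x < e" using m by linarith
  qed
qed

lemma Eq_Sset: "Eq \<gamma> \<psi> q = Sset \<gamma> q (\<psi> q) (\<lambda>_ _. True)"
proof -
  have "maxnorm (real q *\<^sub>R \<alpha> - \<gamma> - (real_of_int m1, real_of_int m2)) = maxnorm (real q *\<^sub>R \<alpha> - (real_of_int m1, real_of_int m2) - \<gamma>)" for \<alpha> m1 m2
    by (simp add: algebra_simps)
  then show ?thesis unfolding Eq_def Sset_def using distZ2_props(2) by auto
qed

lemma Eq0: "\<psi> q = 0 \<Longrightarrow> Eq \<gamma> \<psi> q = {}"
  unfolding Eq_def using distZ2_props(1) by (auto simp: not_less)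

lemma Eq'_Sset: "\<psi> q \<noteq> 0 \<Longrightarrow> Eq' \<gamma> \<sigma> A a \<psi> q = Sset \<gamma> q (\<psi> q) (\<lambda>u1 u2. (u1 mod int q, u2 mod int q) \<in> Sq \<gamma> \<sigma> A a \<psi> q)"
  unfolding Eq'_def Sset_def by simp

lemma good_char:
  assumes S: "setting \<gamma> \<sigma> K0 \<psi> A a" and q: "q \<ge> 1"
  shows "\<exists>D C1 C2. D \<ge> 1 \<and> (\<forall>u1 u2. (u1 mod int q, u2 mod int q) \<in> Sq \<gamma> \<sigma> A a \<psi> q \<longleftrightarrow>
      (\<forall>p\<in>{p. prime p \<and> p dvd q \<and> \<not> p dvd D}. \<not> (int p dvd int D * u1 + C1 \<and> int p dvd int D * u2 + C2)))"
proof -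
  obtain D C1 C2 where D: "D \<ge> 1" and cp: "\<forall>p::nat. prime p \<longrightarrow> int p dvd int D \<longrightarrow> \<not> (int p dvd C1 \<and> int p dvd C2)"
    and Sq: "Sq \<gamma> \<sigma> A a \<psi> q = {u \<in> {0..<int q} \<times> {0..<int q}. gcd3 (int D * fst u + C1, int D * snd u + C2) (int D * int q) = 1}"
    using Sq_form[OF S] by blast
  have "(u1 mod int q, u2 mod int q) \<in> Sq \<gamma> \<sigma> A a \<psi> q \<longleftrightarrow>
      (\<forall>p\<in>{p. prime p \<and> p dvd q \<and> \<not> p dvd D}. \<not> (int p dvd int D * u1 + C1 \<and> int p dvd int D * u2 + C2))" for u1 u2
  proof -
    have "(u1 mod int q, u2 mod int q) \<in> Sq \<gamma> \<sigma> A a \<psi> q \<longleftrightarrow>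
       gcd (gcd (int D * (u1 mod int q) + C1) (int D * (u2 mod int q) + C2)) (int D * int q) = 1"
      unfolding Sq gcd3_def using q by auto
    also have "\<dots> \<longleftrightarrow> (\<forall>p\<in>{p. prime p \<and> p dvd q \<and> \<not> p dvd D}. \<not> (int p dvd int D * (u1 mod int q) + C1 \<and> int p dvd int D * (u2 mod int q) + C2))"
      by (rule gcd3_char[OF D q cp])
    also have "\<dots> \<longleftrightarrow> (\<forall>p\<in>{p. prime p \<and> p dvd q \<and> \<not> p dvd D}. \<not> (int p dvd int D * u1 + C1 \<and> int p dvd int D * u2 + C2))"
      using dvd_mod_shift by auto
    finally show ?thesis .
  qed
  then show ?thesis using D by blast
qed

lemma cov1:
  fixes q :: nat and x lo hi g \<psi> :: real and u :: int
  assumes "\<bar>q * x - u - g\<bar> < \<psi>" "\<psi> \<le> 1/2" "lo \<le> x" "x \<le> hi" "q \<ge> 1"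
  shows "u \<in> {\<lfloor>q*lo - g - 1/2\<rfloor> + 1 ..< \<lfloor>q*lo - g - 1/2\<rfloor> + 1 + int (nat \<lceil>q*(hi-lo) + 1\<rceil>)}"
proof -
  have q0: "real q \<ge> 0" by simp
  have "q * lo \<le> q * x" "q * x \<le> q * hi" using assms(3,4) q0 by (auto intro: mult_left_mono)
  then have u1: "real_of_int u > q*lo - g - 1/2" "real_of_int u < q*hi - g + 1/2" using assms(1,2) by (auto simp: abs_less_iff)
  have "u \<ge> \<lfloor>q*lo - g - 1/2\<rfloor> + 1" using u1(1) by linarith
  moreover have "real_of_int (\<lfloor>q*lo - g - 1/2\<rfloor> + 1 + int (nat \<lceil>q*(hi-lo) + 1\<rceil>)) > q*hi - g + 1/2"
  proof -
    have "hi - lo \<ge> 0" using assms by simp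
    then have "q*(hi-lo) + 1 \<ge> 0" by simp
    then have "real_of_int (int (nat \<lceil>q*(hi-lo) + 1\<rceil>)) \<ge> q*(hi-lo) + 1" by linarith
    moreover have "real_of_int (\<lfloor>q*lo - g - 1/2\<rfloor> + 1) > q*lo - g - 1/2" by linarith
    ultimately show ?thesis by (simp add: algebra_simps)
  qed
  ultimately show ?thesis using u1(2) by simp
qed

lemma inner1:
  fixes q :: nat and y lo hi g \<psi> :: real and u :: int
  assumes "\<bar>q * y - u - g\<bar> < \<psi>" "\<psi> \<le> 1/2" "q \<ge> 1"
    and u: "u \<in> {\<lceil>q*lo - g + 1/2\<rceil> ..< \<lceil>q*lo - g + 1/2\<rceil> + int (nat \<lfloor>q*(hi - lo) - 1\<rfloor>)}"
  shows "lo < y \<and> y < hi"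
proof -
  have qp: "real q > 0" using assms by simp
  have h0: "\<lceil>q*lo - g + 1/2\<rceil> \<le> u" using u by simp
  then have a: "real_of_int u \<ge> q*lo - g + 1/2" by (simp add: ceiling_le_iff)
  have "u < \<lceil>q*lo - g + 1/2\<rceil> + int (nat \<lfloor>q*(hi - lo) - 1\<rfloor>)" using u by auto
  moreover have "int (nat \<lfloor>q*(hi - lo) - 1\<rfloor>) = \<lfloor>q*(hi - lo) - 1\<rfloor>"
    using calculation h0 by linarith
  ultimately have "u \<le> \<lceil>q*lo - g + 1/2\<rceil> + \<lfloor>q*(hi - lo) - 1\<rfloor> - 1" by linarith
  then have b: "real_of_int u < q*hi - g - 1/2" by (simp add: algebra_simps) linarith
  have "q * y > q * lo" using a assms(1,2) by (auto simp: abs_less_iff)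
  moreover have "q * y < q * hi" using b assms(1,2) by (auto simp: abs_less_iff)
  ultimately show ?thesis using qp by auto
qed

lemma maxball_box: "maxball c r = box (fst c - r, snd c - r) (fst c + r, snd c + r)"
  unfolding maxball_def maxnorm_def set_eq_iff mem_box Basis_prod_def
  by (auto simp: abs_less_iff)

lemma maxball_measure: "r > 0 \<Longrightarrow> measure lborel (maxball c r) = 4 * r^2"
  unfolding maxball_box measure_lborel_box_eq by (auto simp: Basis_prod_def power2_eq_square)

lemma maxball_sets: "maxball c r \<in> sets lborel"
  unfolding maxball_box by simp

lemma quad1:
  fixes z h y :: real
  assumes "0 \<le> z" "z < 1" "0 < h" "h \<le> 1/2"
    "(if z < 1/2 then z else z - h) < y" "y < (if z < 1/2 then z else z - h) + h"
  shows "\<bar>y - z\<bar> < h \<and> 0 \<le> y \<and> y \<le> 1"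
  using assms by (cases "z < 1/2") (auto simp: abs_less_iff)

lemma part_i_lower:
  fixes \<gamma> :: "real \<times> real" and q :: nat and \<psi> :: real
  assumes q: "q \<ge> 1" and psi: "0 < \<psi>" "\<psi> \<le> 1/2"
    and G: "\<And>u. u \<in> J \<Longrightarrow> G (fst u) (snd u)"
    and J: "J \<subseteq> {\<lceil>- fst \<gamma>\<rceil>..<\<lceil>- fst \<gamma>\<rceil> + int q} \<times> {\<lceil>- snd \<gamma>\<rceil>..<\<lceil>- snd \<gamma>\<rceil> + int q}"
  shows "(\<psi>/q)^2 * card J \<le> measure lborel (Sset \<gamma> q \<psi> G)"
proof -
  have qp: "real q > 0" "real q \<ge> 1" using q by auto
  define h where "h = \<psi> / q"
  have h: "0 < h" "h \<le> 1/2" unfolding h_def using psi qp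
    by (auto simp: divide_le_eq intro: order_trans[of _ "1/2" "real q / 2"])
  define z1 where "z1 = (\<lambda>u::int\<times>int. (real_of_int (fst u) + fst \<gamma>) / q)"
  define z2 where "z2 = (\<lambda>u::int\<times>int. (real_of_int (snd u) + snd \<gamma>) / q)"
  define l1 where "l1 = (\<lambda>u. if z1 u < 1/2 then z1 u else z1 u - h)"
  define l2 where "l2 = (\<lambda>u. if z2 u < 1/2 then z2 u else z2 u - h)"
  define K where "K = (\<lambda>u. box (l1 u, l2 u) (l1 u + h, l2 u + h))"
  have finJ: "finite J" using J by (rule finite_subset) auto
  have zr: "0 \<le> z1 u" "z1 u < 1" "0 \<le> z2 u" "z2 u < 1" if u: "u \<in> J" for u
  proof -
    have a: "real_of_int (fst u) \<ge> - fst \<gamma>" "real_of_int (snd u) \<ge> - snd \<gamma>"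
      using J u by (auto simp: ceiling_le_iff)
    have "fst u < \<lceil>- fst \<gamma>\<rceil> + int q" "snd u < \<lceil>- snd \<gamma>\<rceil> + int q" using J u by auto
    then have b: "real_of_int (fst u) < - fst \<gamma> + q" "real_of_int (snd u) < - snd \<gamma> + q" by linarith+
    show "0 \<le> z1 u" "z1 u < 1" "0 \<le> z2 u" "z2 u < 1" unfolding z1_def z2_def using a b qp by (auto simp: field_simps)
  qed
  have "(\<psi>/q)^2 * card J \<le> measure lborel (UNIV \<inter> Sset \<gamma> q \<psi> G)"
  proof (rule Sset_lower[OF q less_imp_le[OF psi(1)] psi(2) _ finJ, where K=K and m="(\<psi>/q)^2"])
    show "UNIV \<in> sets lborel" by simp
  next
    fix u assume u: "u \<in> J"
    show "K u \<subseteq> Bx \<gamma> q \<psi> (fst u) (snd u) \<inter> UNIV \<inter> {0..1} \<times> {0..1}"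
    proof
      fix y assume yK: "y \<in> K u"
      obtain y1 y2 where yy: "y = (y1, y2)" by fastforce
      have y: "l1 u < fst y" "fst y < l1 u + h" "l2 u < snd y" "snd y < l2 u + h"
        using yK unfolding yy K_def mem_box Basis_prod_def by auto
      have c1: "\<bar>fst y - z1 u\<bar> < h \<and> 0 \<le> fst y \<and> fst y \<le> 1"
        using quad1[OF zr(1,2)[OF u] h] y(1,2) unfolding l1_def by auto
      have c2: "\<bar>snd y - z2 u\<bar> < h \<and> 0 \<le> snd y \<and> snd y \<le> 1"
        using quad1[OF zr(3,4)[OF u] h] y(3,4) unfolding l2_def by auto
      have e1: "\<bar>q * fst y - fst u - fst \<gamma>\<bar> = q * \<bar>fst y - z1 u\<bar>"
        unfolding z1_def using qp by (simp add: field_simps abs_mult[symmetric])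
      have e2: "\<bar>q * snd y - snd u - snd \<gamma>\<bar> = q * \<bar>snd y - z2 u\<bar>"
        unfolding z2_def using qp by (simp add: field_simps abs_mult[symmetric])
      have "q * \<bar>fst y - z1 u\<bar> < q * h" "q * \<bar>snd y - z2 u\<bar> < q * h"
        using c1 c2 qp by auto
      moreover have "q * h = \<psi>" unfolding h_def using qp by simp
      ultimately have "\<bar>q * fst y - fst u - fst \<gamma>\<bar> < \<psi>" "\<bar>q * snd y - snd u - snd \<gamma>\<bar> < \<psi>"
        using e1 e2 by auto
      then have "y \<in> Bx \<gamma> q \<psi> (fst u) (snd u)"
        unfolding Bx_def maxnorm_def by (cases y) auto
      then show "y \<in> Bx \<gamma> q \<psi> (fst u) (snd u) \<inter> UNIV \<inter> {0..1} \<times> {0..1}"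
        using c1 c2 by (cases y) auto
    qed
    show "K u \<in> sets lborel" unfolding K_def by simp
    show "measure lborel (K u) = (\<psi>/q)^2"
      unfolding K_def measure_lborel_box_eq h_def using h by (auto simp: Basis_prod_def power2_eq_square h_def)
    show "G (fst u) (snd u)" using G[OF u] .
  qed
  then show ?thesis by simp
qed

definition Iu :: "real \<times> real \<Rightarrow> nat \<Rightarrow> (int \<times> int) set" where
  "Iu \<gamma> q = {\<lfloor>- fst \<gamma> - 1/2\<rfloor> + 1 ..< \<lfloor>- fst \<gamma> - 1/2\<rfloor> + 1 + int (q+1)} \<times>
             {\<lfloor>- snd \<gamma> - 1/2\<rfloor> + 1 ..< \<lfloor>- snd \<gamma> - 1/2\<rfloor> + 1 + int (q+1)}"

lemma unit_upper:
  assumes q: "q \<ge> 1" and psi: "0 \<le> \<psi>" "\<psi> \<le> 1/2"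
  shows "measure lborel (Sset \<gamma> q \<psi> G) \<le> (2*\<psi>/q)^2 * card {u\<in>Iu \<gamma> q. G (fst u) (snd u)}"
proof -
  have "measure lborel (UNIV \<inter> Sset \<gamma> q \<psi> G) \<le> (2*\<psi>/q)^2 * card {u\<in>Iu \<gamma> q. G (fst u) (snd u)}"
  proof (rule Sset_upper[OF q psi(1)])
    show "UNIV \<in> sets lborel" by simp
    show "finite (Iu \<gamma> q)" unfolding Iu_def by simp
    fix u1 u2 x assume h: "G u1 u2" "x \<in> UNIV" "x \<in> {0..1} \<times> {0..1}" "x \<in> Bx \<gamma> q \<psi> u1 u2"
    obtain x1 x2 where xx: "x = (x1, x2)" by fastforce
    have b: "\<bar>q * x1 - u1 - fst \<gamma>\<bar> < \<psi>" "\<bar>q * x2 - u2 - snd \<gamma>\<bar> < \<psi>"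
      using h(4) unfolding Bx_def maxnorm_def xx by auto
    have "u1 \<in> {\<lfloor>real q*(0::real) - fst \<gamma> - 1/2\<rfloor> + 1 ..< \<lfloor>real q*(0::real) - fst \<gamma> - 1/2\<rfloor> + 1 + int (nat \<lceil>real q*(1-(0::real)) + 1\<rceil>)}"
      using h(3) xx by (intro cov1[OF b(1) psi(2) _ _ q, where lo=0 and hi=1]) auto
    moreover have "u2 \<in> {\<lfloor>real q*(0::real) - snd \<gamma> - 1/2\<rfloor> + 1 ..< \<lfloor>real q*(0::real) - snd \<gamma> - 1/2\<rfloor> + 1 + int (nat \<lceil>real q*(1-(0::real)) + 1\<rceil>)}"
      using h(3) xx by (intro cov1[OF b(2) psi(2) _ _ q, where lo=0 and hi=1]) auto
    moreover have "nat \<lceil>real q*(1-(0::real)) + 1\<rceil> = q + 1" by simp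
    ultimately show "(u1, u2) \<in> Iu \<gamma> q" unfolding Iu_def by simp
  qed
  then show ?thesis by simp
qed

lemma coprime_P': "prime p \<Longrightarrow> \<not> p dvd D \<Longrightarrow> coprime D (p::nat)"
  using prime_imp_coprime[of p D] by (simp add: coprime_commute)

lemma coprime_P: "p \<in> {p. prime p \<and> p dvd q \<and> \<not> p dvd D} \<Longrightarrow> coprime (int D) (int p)"
proof -
  assume "p \<in> {p. prime p \<and> p dvd q \<and> \<not> p dvd D}"
  then have "coprime p D" by (intro prime_imp_coprime) auto
  then show ?thesis by (simp add: coprime_commute)
qed

lemma part_i:
  assumes S: "setting \<gamma> \<sigma> K0 \<psi> A a" and q: "q \<ge> 1"
  shows "measure lborel (Eq' \<gamma> \<sigma> A a \<psi> q) \<ge> (1/64) * measure lborel (Eq \<gamma> \<psi> q)"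
proof (cases "\<psi> q = 0")
  case True
  then show ?thesis using Eq0[of \<psi> q \<gamma>] by simp
next
  case False
  have psi: "0 < \<psi> q" "\<psi> q \<le> 1/2" using S q False unfolding setting_def by (auto simp: order_le_less)
  obtain D C1 C2 where D: "D \<ge> 1" and G: "\<And>u1 u2. (u1 mod int q, u2 mod int q) \<in> Sq \<gamma> \<sigma> A a \<psi> q \<longleftrightarrow>
      (\<forall>p\<in>{p. prime p \<and> p dvd q \<and> \<not> p dvd D}. \<not> (int p dvd int D * u1 + C1 \<and> int p dvd int D * u2 + C2))"
    using good_char[OF S q] by blast
  define P where "P = {p. prime p \<and> p dvd q \<and> \<not> p dvd D}"
  define J where "J = goodset P (\<lambda>_. int D) (\<lambda>_. C1) (\<lambda>_. C2) \<lceil>- fst \<gamma>\<rceil> \<lceil>- snd \<gamma>\<rceil> q q"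
  have cJ: "real (card J) \<ge> real q ^ 2 / 4" unfolding J_def
    by (rule full_period[OF q]) (auto simp: P_def coprime_P')
  have "(\<psi> q / q)^2 * card J \<le> measure lborel (Sset \<gamma> q (\<psi> q) (\<lambda>u1 u2. (u1 mod int q, u2 mod int q) \<in> Sq \<gamma> \<sigma> A a \<psi> q))"
    by (rule part_i_lower[OF q psi]) (auto simp: J_def goodset_def G P_def)
  then have L: "(\<psi> q / q)^2 * card J \<le> measure lborel (Eq' \<gamma> \<sigma> A a \<psi> q)" using Eq'_Sset[of \<psi> q, OF False] by simp
  have "measure lborel (Eq \<gamma> \<psi> q) \<le> (2*\<psi> q/q)^2 * card {u\<in>Iu \<gamma> q. True}"
    unfolding Eq_Sset using unit_upper[OF q less_imp_le[OF psi(1)] psi(2), of \<gamma> "\<lambda>_ _. True"] by simp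
  also have "card {u\<in>Iu \<gamma> q. True} = (q+1)^2"
  proof -
    have "nat (1 + int q) = q + 1" by simp
    then show ?thesis unfolding Iu_def by (simp add: card_cartesian_product power2_eq_square)
  qed
  finally have U: "measure lborel (Eq \<gamma> \<psi> q) \<le> (2*\<psi> q/q)^2 * (real q+1)^2" by (simp add: add.commute)
  have qp: "real q \<ge> 1" using q by simp
  have "(2*\<psi> q/q)^2 * (real q+1)^2 = 4 * \<psi> q^2 * ((real q + 1)/q)^2" by (simp add: power_divide field_simps)
  also have "\<dots> \<le> 4 * \<psi> q^2 * 2^2"
  proof -
    have "(real q + 1)/q \<le> 2" using qp by (simp add: field_simps)
    moreover have "(real q + 1)/q \<ge> 0" by simp
    ultimately show ?thesis by (intro mult_left_mono power_mono) auto
  qed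
  finally have U2: "measure lborel (Eq \<gamma> \<psi> q) \<le> 16 * \<psi> q^2" using U by simp
  have "(\<psi> q / q)^2 * card J \<ge> (\<psi> q / q)^2 * (real q ^ 2 / 4)" using cJ by (intro mult_left_mono) auto
  also have "(\<psi> q / q)^2 * (real q ^ 2 / 4) = \<psi> q^2 / 4" using qp by (simp add: power_divide)
  finally have "\<psi> q^2 / 4 \<le> measure lborel (Eq' \<gamma> \<sigma> A a \<psi> q)" using L by linarith
  then show ?thesis using U2 by simp
qed

lemma ratio_bounds:
  fixes num den k a0 b0 c0 d0 K :: real
  assumes "k > 0" "K > 0" "a0 \<ge> 0" "c0 > 0"
    "k * a0 \<le> num" "num \<le> k * b0" "k * c0 \<le> den" "den \<le> k * d0"
  shows "a0 / (K * d0) \<le> num / (K * den)" "num / (K * den) \<le> b0 / (K * c0)"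
proof -
  have den: "den > 0" using assms by (meson mult_pos_pos order_less_le_trans)
  have d0: "d0 \<ge> c0" using assms by (meson mult_le_cancel_left_pos order_trans)
  then have d0p: "d0 > 0" using assms by linarith
  have "a0 / (K * d0) = (k * a0) / (K * (k * d0))" using assms by simp
  also have "\<dots> \<le> num / (K * (k * d0))" using assms d0p by (intro divide_right_mono) auto
  also have "\<dots> \<le> num / (K * den)"
  proof (rule divide_left_mono)
    show "0 \<le> num" using assms by (meson mult_nonneg_nonneg order_trans less_imp_le)
    show "K * den \<le> K * (k * d0)" using assms by simp
    show "0 < K * (k * d0) * (K * den)" using assms den d0p by simp
  qed
  finally show "a0 / (K * d0) \<le> num / (K * den)" .
  have "num / (K * den) \<le> (k * b0) / (K * den)" using assms den by (intro divide_right_mono) auto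
  also have "\<dots> \<le> (k * b0) / (K * (k * c0))"
  proof (rule divide_left_mono)
    have "num \<ge> 0" using assms by (meson mult_nonneg_nonneg order_trans less_imp_le)
    then show "0 \<le> k * b0" using assms by linarith
    show "K * (k * c0) \<le> K * den" using assms by simp
    show "0 < K * den * (K * (k * c0))" using assms den by simp
  qed
  also have "\<dots> = b0 / (K * c0)" using assms by simp
  finally show "num / (K * den) \<le> b0 / (K * c0)" .
qed

lemma sieve_norm:
  fixes N L E \<rho> V :: real
  assumes "\<bar>N - L*L*\<rho>\<bar> \<le> E * (L + L + 4)" "1/4 \<le> \<rho>" "0 \<le> E" "4 * E \<le> V" "L \<ge> 0"
  shows "\<rho> * (L^2 - V*(2*L+4)) \<le> N" "N \<le> \<rho> * (L^2 + V*(2*L+4))"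
proof -
  have "E * (L + L + 4) \<le> (\<rho> * V) * (2*L+4)"
  proof (rule mult_mono)
    show "E \<le> \<rho> * V"
    proof -
      have "V \<ge> 0" using assms by linarith
      then have "(1/4) * V \<le> \<rho> * V" using assms by (intro mult_right_mono) auto
      then show ?thesis using assms by linarith
    qed
  qed (use assms in auto)
  then have "\<bar>N - L*L*\<rho>\<bar> \<le> \<rho> * V * (2*L+4)" using assms(1) by linarith
  then show "\<rho> * (L^2 - V*(2*L+4)) \<le> N" "N \<le> \<rho> * (L^2 + V*(2*L+4))"
    by (auto simp: abs_le_iff algebra_simps power2_eq_square)
qed

lemma part_ii_q:
  fixes ctr :: "real \<times> real" and r :: real
  assumes S: "setting \<gamma> \<sigma> K0 \<psi> A a" and q: "q \<ge> 1" and psi0: "\<psi> q > 0" and r: "r > 0"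
    and ball: "maxball ctr r \<subseteq> {0..<1} \<times> {0..<1}"
    and c1: "2*real q*r - 2 \<ge> 0"
    and c2: "(2*real q*r-2)^2 - 4*3^9* sqrt (real q)*(4*real q*r+4) \<ge> 0"
    and c3: "(real q-1)^2 - 4*3^9* sqrt (real q)*(2*real q+2) > 0"
  shows "((2*real q*r-2)^2 - 4*3^9* sqrt (real q)*(4*real q*r+4)) / (4*r^2 * ((real q+1)^2 + 4*3^9* sqrt (real q)*(2*real q+6)))
           \<le> measure lborel (maxball ctr r \<inter> Eq' \<gamma> \<sigma> A a \<psi> q) / (measure lborel (maxball ctr r) * measure lborel (Eq' \<gamma> \<sigma> A a \<psi> q))"
    "measure lborel (maxball ctr r \<inter> Eq' \<gamma> \<sigma> A a \<psi> q) / (measure lborel (maxball ctr r) * measure lborel (Eq' \<gamma> \<sigma> A a \<psi> q))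
           \<le> ((2*real q*r+2)^2 + 4*3^9* sqrt (real q)*(4*real q*r+8)) / (4*r^2 * ((real q-1)^2 - 4*3^9* sqrt (real q)*(2*real q+2)))"
proof -
  define V where "V = 4*3^9* sqrt (real q)"
  have psi: "0 \<le> \<psi> q" "\<psi> q \<le> 1/2" using S q psi0 unfolding setting_def by auto
  have qp: "real q \<ge> 1" using q by simp
  obtain D C1 C2 where D: "D \<ge> 1" and G: "\<And>u1 u2. (u1 mod int q, u2 mod int q) \<in> Sq \<gamma> \<sigma> A a \<psi> q \<longleftrightarrow>
      (\<forall>p\<in>{p. prime p \<and> p dvd q \<and> \<not> p dvd D}. \<not> (int p dvd int D * u1 + C1 \<and> int p dvd int D * u2 + C2))"
    using good_char[OF S q] by blast
  define P where "P = {p. prime p \<and> p dvd q \<and> \<not> p dvd D}"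
  define Gp where "Gp = (\<lambda>u1 u2. (u1 mod int q, u2 mod int q) \<in> Sq \<gamma> \<sigma> A a \<psi> q)"
  define \<rho> where "\<rho> = (\<Prod>p\<in>P. 1 - 1/(real p)^2)"
  define E :: real where "E = 3 ^ card P"
  have P2: "P \<subseteq> {2..q}"
  proof
    fix x assume "x \<in> P"
    then have "prime x" "x dvd q" unfolding P_def by auto
    then show "x \<in> {2..q}" using q prime_ge_2_nat[of x] dvd_imp_le[of x q] by auto
  qed
  have finP: "finite P" using P2 finite_subset by blast
  have rho: "1/4 \<le> \<rho>" "\<rho> \<le> 1" unfolding \<rho>_def using rho_lower[OF P2] rho_upper[OF P2] by auto
  have E: "0 \<le> E" "4 * E \<le> V" unfolding E_def V_def using three_pow_bound[OF q, of P] by (auto simp: P_def)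
  have sv: "\<bar>real (card (goodset P (\<lambda>_. int D) (\<lambda>_. C1) (\<lambda>_. C2) a1 a2 L L)) - real L * real L * \<rho>\<bar> \<le> E * (real L + real L + 4)" for a1 a2 L
  proof -
    have primesP: "\<forall>p\<in>P. prime p" unfolding P_def by auto
    have cop: "\<forall>p\<in>P. coprime ((\<lambda>_. int D) p) (int p)" using coprime_P unfolding P_def by auto
    show ?thesis unfolding \<rho>_def E_def
      by (rule sieve[OF finP primesP, rule_format, of "\<lambda>_. int D"]) (use cop in auto)
  qed
  have cnt: "\<rho> * ((real L)^2 - V*(2*real L+4)) \<le> card (goodset P (\<lambda>_. int D) (\<lambda>_. C1) (\<lambda>_. C2) a1 a2 L L)"
    "card (goodset P (\<lambda>_. int D) (\<lambda>_. C1) (\<lambda>_. C2) a1 a2 L L) \<le> \<rho> * ((real L)^2 + V*(2*real L+4))" for a1 a2 L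
    using sieve_norm[OF sv rho(1) E] by auto
  have gs: "{u \<in> {a1..<a1+int L} \<times> {a2..<a2+int L}. Gp (fst u) (snd u)} = goodset P (\<lambda>_. int D) (\<lambda>_. C1) (\<lambda>_. C2) a1 a2 L L" for a1 a2 L
    unfolding goodset_def Gp_def G P_def by auto
  have Eq': "Eq' \<gamma> \<sigma> A a \<psi> q = Sset \<gamma> q (\<psi> q) Gp" unfolding Gp_def using Eq'_Sset[of \<psi> q] psi0 by simp
  define w where "w = (2 * \<psi> q / q)^2"
  have w: "w > 0" unfolding w_def using psi0 qp by simp
  have Bxm: "measure lborel (Bx \<gamma> q (\<psi> q) u1 u2) = w" for u1 u2 unfolding w_def using Bx_measure[OF q psi(1)] by simp
  define m where "m = nat \<lceil>real q * (2*r) + 1\<rceil>"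
  define n where "n = nat \<lfloor>real q * (2*r) - 1\<rfloor>"
  define lo1 where "lo1 = \<lfloor>real q * (fst ctr - r) - fst \<gamma> - 1/2\<rfloor> + 1"
  define lo2 where "lo2 = \<lfloor>real q * (snd ctr - r) - snd \<gamma> - 1/2\<rfloor> + 1"
  define li1 where "li1 = \<lceil>real q * (fst ctr - r) - fst \<gamma> + 1/2\<rceil>"
  define li2 where "li2 = \<lceil>real q * (snd ctr - r) - snd \<gamma> + 1/2\<rceil>"
  define lu1 where "lu1 = \<lceil>real q * 0 - fst \<gamma> + 1/2\<rceil>"
  define lu2 where "lu2 = \<lceil>real q * 0 - snd \<gamma> + 1/2\<rceil>"
  let ?num = "measure lborel (maxball ctr r \<inter> Eq' \<gamma> \<sigma> A a \<psi> q)"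
  let ?den = "measure lborel (Eq' \<gamma> \<sigma> A a \<psi> q)"
  let ?card = "\<lambda>a1 a2 L. real (card (goodset P (\<lambda>_. int D) (\<lambda>_. C1) (\<lambda>_. C2) a1 a2 L L))"
  have hr: "(fst ctr + r) - (fst ctr - r) = 2*r" "(snd ctr + r) - (snd ctr - r) = 2*r" by simp_all
  have bA: "?num \<le> w * ?card lo1 lo2 m"
  proof -
    have "measure lborel (maxball ctr r \<inter> Sset \<gamma> q (\<psi> q) Gp) \<le> (2*\<psi> q/q)^2 * card {u\<in>{lo1..<lo1+int m} \<times> {lo2..<lo2+int m}. Gp (fst u) (snd u)}"
    proof (rule Sset_upper[OF q psi(1) maxball_sets])
      show "finite ({lo1..<lo1+int m} \<times> {lo2..<lo2+int m})" by simp
      fix u1 u2 x assume h: "Gp u1 u2" "x \<in> maxball ctr r" "x \<in> {0..1} \<times> {0..1}" "x \<in> Bx \<gamma> q (\<psi> q) u1 u2"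
      obtain x1 x2 where xx: "x = (x1, x2)" by fastforce
      have b: "\<bar>q * x1 - u1 - fst \<gamma>\<bar> < \<psi> q" "\<bar>q * x2 - u2 - snd \<gamma>\<bar> < \<psi> q"
        using h(4) unfolding Bx_def maxnorm_def xx by auto
      have xb: "\<bar>x1 - fst ctr\<bar> < r" "\<bar>x2 - snd ctr\<bar> < r"
        using h(2) unfolding maxball_def maxnorm_def xx by auto
      have "u1 \<in> {lo1..<lo1 + int m}"
        using cov1[OF b(1) psi(2) _ _ q, of "fst ctr - r" "fst ctr + r"] xb hr unfolding lo1_def m_def by (auto simp: abs_less_iff)
      moreover have "u2 \<in> {lo2..<lo2 + int m}"
        using cov1[OF b(2) psi(2) _ _ q, of "snd ctr - r" "snd ctr + r"] xb hr unfolding lo2_def m_def by (auto simp: abs_less_iff)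
      ultimately show "(u1, u2) \<in> {lo1..<lo1+int m} \<times> {lo2..<lo2+int m}" by simp
    qed
    then show ?thesis unfolding Eq' gs w_def by simp
  qed
  have bB: "w * ?card li1 li2 n \<le> ?num"
  proof -
    let ?J = "goodset P (\<lambda>_. int D) (\<lambda>_. C1) (\<lambda>_. C2) li1 li2 n n"
    have "w * card ?J \<le> measure lborel (maxball ctr r \<inter> Sset \<gamma> q (\<psi> q) Gp)"
    proof (rule Sset_lower[OF q psi maxball_sets, where K="\<lambda>u. Bx \<gamma> q (\<psi> q) (fst u) (snd u)"])
      show "finite ?J" unfolding goodset_def by simp
      fix u assume u: "u \<in> ?J"
      have uJ: "fst u \<in> {li1..<li1 + int n}" "snd u \<in> {li2..<li2 + int n}" using u unfolding goodset_def by auto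
      show "Bx \<gamma> q (\<psi> q) (fst u) (snd u) \<subseteq> Bx \<gamma> q (\<psi> q) (fst u) (snd u) \<inter> maxball ctr r \<inter> {0..1} \<times> {0..1}"
      proof
        fix y assume y: "y \<in> Bx \<gamma> q (\<psi> q) (fst u) (snd u)"
        obtain y1 y2 where yy: "y = (y1, y2)" by fastforce
        have b: "\<bar>q * y1 - fst u - fst \<gamma>\<bar> < \<psi> q" "\<bar>q * y2 - snd u - snd \<gamma>\<bar> < \<psi> q"
          using y unfolding Bx_def maxnorm_def yy by auto
        have "fst ctr - r < y1 \<and> y1 < fst ctr + r"
          by (rule inner1[OF b(1) psi(2) q]) (use uJ hr in \<open>simp add: li1_def n_def\<close>)
        moreover have "snd ctr - r < y2 \<and> y2 < snd ctr + r"
          by (rule inner1[OF b(2) psi(2) q]) (use uJ hr in \<open>simp add: li2_def n_def\<close>)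
        ultimately have "y \<in> maxball ctr r" unfolding maxball_def maxnorm_def yy by (auto simp: abs_less_iff)
        then show "y \<in> Bx \<gamma> q (\<psi> q) (fst u) (snd u) \<inter> maxball ctr r \<inter> {0..1} \<times> {0..1}"
          using y ball by auto
      qed
      show "Bx \<gamma> q (\<psi> q) (fst u) (snd u) \<in> sets lborel" unfolding Bx_eq_box[OF q] by simp
      show "measure lborel (Bx \<gamma> q (\<psi> q) (fst u) (snd u)) = w" by (rule Bxm)
      show "Gp (fst u) (snd u)" using u gs[of li1 n li2] by blast
    qed
    then show ?thesis unfolding Eq' by simp
  qed
  have bC: "?den \<le> w * ?card (\<lfloor>- fst \<gamma> - 1/2\<rfloor> + 1) (\<lfloor>- snd \<gamma> - 1/2\<rfloor> + 1) (q+1)"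
  proof -
    have "?den \<le> w * card {u\<in>Iu \<gamma> q. Gp (fst u) (snd u)}"
      unfolding Eq' w_def using unit_upper[OF q psi] by simp
    also have "{u\<in>Iu \<gamma> q. Gp (fst u) (snd u)} = goodset P (\<lambda>_. int D) (\<lambda>_. C1) (\<lambda>_. C2) (\<lfloor>- fst \<gamma> - 1/2\<rfloor> + 1) (\<lfloor>- snd \<gamma> - 1/2\<rfloor> + 1) (q+1) (q+1)"
      unfolding Iu_def gs[symmetric] by simp
    finally show ?thesis .
  qed
  have bD: "w * ?card lu1 lu2 (q-1) \<le> ?den"
  proof -
    let ?J = "goodset P (\<lambda>_. int D) (\<lambda>_. C1) (\<lambda>_. C2) lu1 lu2 (q-1) (q-1)"
    have nq: "nat \<lfloor>real q * (1 - 0) - 1\<rfloor> = q - 1" using q by (simp add: of_nat_diff[symmetric])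
    have "w * card ?J \<le> measure lborel (UNIV \<inter> Sset \<gamma> q (\<psi> q) Gp)"
    proof (rule Sset_lower[OF q psi _, where K="\<lambda>u. Bx \<gamma> q (\<psi> q) (fst u) (snd u)"])
      show "UNIV \<in> sets lborel" by simp
      show "finite ?J" unfolding goodset_def by simp
      fix u assume u: "u \<in> ?J"
      have uJ: "fst u \<in> {lu1..<lu1 + int (q-1)}" "snd u \<in> {lu2..<lu2 + int (q-1)}" using u unfolding goodset_def by auto
      show "Bx \<gamma> q (\<psi> q) (fst u) (snd u) \<subseteq> Bx \<gamma> q (\<psi> q) (fst u) (snd u) \<inter> UNIV \<inter> {0..1} \<times> {0..1}"
      proof
        fix y assume y: "y \<in> Bx \<gamma> q (\<psi> q) (fst u) (snd u)"
        obtain y1 y2 where yy: "y = (y1, y2)" by fastforce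
        have b: "\<bar>q * y1 - fst u - fst \<gamma>\<bar> < \<psi> q" "\<bar>q * y2 - snd u - snd \<gamma>\<bar> < \<psi> q"
          using y unfolding Bx_def maxnorm_def yy by auto
        have "0 < y1 \<and> y1 < 1"
          by (rule inner1[OF b(1) psi(2) q, where lo=0 and hi=1]) (use uJ nq in \<open>simp add: lu1_def\<close>)
        moreover have "0 < y2 \<and> y2 < 1"
          by (rule inner1[OF b(2) psi(2) q, where lo=0 and hi=1]) (use uJ nq in \<open>simp add: lu2_def\<close>)
        ultimately show "y \<in> Bx \<gamma> q (\<psi> q) (fst u) (snd u) \<inter> UNIV \<inter> {0..1} \<times> {0..1}"
          using y yy by auto
      qed
      show "Bx \<gamma> q (\<psi> q) (fst u) (snd u) \<in> sets lborel" unfolding Bx_eq_box[OF q] by simp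
      show "measure lborel (Bx \<gamma> q (\<psi> q) (fst u) (snd u)) = w" by (rule Bxm)
      show "Gp (fst u) (snd u)" using u gs[of lu1 "q-1" lu2] by blast
    qed
    then show ?thesis unfolding Eq' by simp
  qed
  have V0: "V \<ge> 0" unfolding V_def by simp
  have qr: "real q * r \<ge> 0" using r by simp
  have nb: "real n \<ge> 2*real q*r - 2" "real n \<le> 2*real q*r"
  proof -
    show "real n \<ge> 2*real q*r - 2" unfolding n_def by linarith
    show "real n \<le> 2*real q*r"
    proof (cases "\<lfloor>real q * (2*r) - 1\<rfloor> \<ge> 0")
      case True then show ?thesis unfolding n_def by simp linarith
    next
      case False
      then have "n = 0" unfolding n_def by simp
      then show ?thesis using qr by (simp add: mult.commute)
    qed
  qed
  have mb: "real m \<le> 2*real q*r + 2" "real m \<ge> 0" unfolding m_def using qr by linarith+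
  define a0 where "a0 = (2*real q*r-2)^2 - V*(4*real q*r+4)"
  define b0 where "b0 = (2*real q*r+2)^2 + V*(4*real q*r+8)"
  define c0 where "c0 = (real q-1)^2 - V*(2*real q+2)"
  define d0 where "d0 = (real q+1)^2 + V*(2*real q+6)"
  have ka: "(w*\<rho>) * a0 \<le> ?num"
  proof -
    have "(real n)^2 \<ge> (2*real q*r-2)^2" using c1 nb by (intro power_mono) auto
    moreover have "2*real n+4 \<le> 4*real q*r+4" using nb by linarith
    then have "V*(2*real n+4) \<le> V*(4*real q*r+4)" using mult_left_mono V0 by blast
    ultimately have "a0 \<le> (real n)^2 - V*(2*real n+4)" unfolding a0_def by linarith
    then have "\<rho> * a0 \<le> \<rho> * ((real n)^2 - V*(2*real n+4))" using rho by (intro mult_left_mono) auto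
    then have "\<rho> * a0 \<le> ?card li1 li2 n" using cnt(1)[of n li1 li2] by linarith
    then have "w * (\<rho> * a0) \<le> w * ?card li1 li2 n" using w by simp
    then show ?thesis using bB by (simp add: mult.assoc)
  qed
  have kb: "?num \<le> (w*\<rho>) * b0"
  proof -
    have "(real m)^2 \<le> (2*real q*r+2)^2" using mb by (intro power_mono) auto
    moreover have "2*real m+4 \<le> 4*real q*r+8" using mb by linarith
    then have "V*(2*real m+4) \<le> V*(4*real q*r+8)" using mult_left_mono V0 by blast
    ultimately have "(real m)^2 + V*(2*real m+4) \<le> b0" unfolding b0_def by linarith
    then have "\<rho> * ((real m)^2 + V*(2*real m+4)) \<le> \<rho> * b0" using rho by (intro mult_left_mono) auto
    then have "?card lo1 lo2 m \<le> \<rho> * b0" using cnt(2)[of lo1 lo2 m] by linarith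
    then have "w * ?card lo1 lo2 m \<le> w * (\<rho> * b0)" using w by simp
    then show ?thesis using bA by (simp add: mult.assoc)
  qed
  have kc: "(w*\<rho>) * c0 \<le> ?den"
  proof -
    have rq: "real (q - 1) = real q - 1" using q by simp
    have "\<rho> * c0 \<le> ?card lu1 lu2 (q-1)" using cnt(1)[of "q-1" lu1 lu2] unfolding c0_def rq
      by (simp add: algebra_simps)
    then have "w * (\<rho> * c0) \<le> w * ?card lu1 lu2 (q-1)" using w by simp
    then show ?thesis using bD by (simp add: mult.assoc)
  qed
  have kd: "?den \<le> (w*\<rho>) * d0"
  proof -
    have "?card (\<lfloor>- fst \<gamma> - 1/2\<rfloor> + 1) (\<lfloor>- snd \<gamma> - 1/2\<rfloor> + 1) (q+1) \<le> \<rho> * d0"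
      using cnt(2)[of "\<lfloor>- fst \<gamma> - 1/2\<rfloor> + 1" "\<lfloor>- snd \<gamma> - 1/2\<rfloor> + 1" "q+1"] unfolding d0_def
      by (simp add: algebra_simps)
    then have "w * ?card (\<lfloor>- fst \<gamma> - 1/2\<rfloor> + 1) (\<lfloor>- snd \<gamma> - 1/2\<rfloor> + 1) (q+1) \<le> w * (\<rho> * d0)" using w by simp
    then show ?thesis using bC by (simp add: mult.assoc)
  qed
  have a0: "a0 \<ge> 0" unfolding a0_def V_def using c2 by simp
  have c0: "c0 > 0" unfolding c0_def V_def using c3 by simp
  have kp: "w * \<rho> > 0" using w rho by simp
  have Kp: "4 * r^2 > 0" using r by simp
  have mb4: "measure lborel (maxball ctr r) = 4 * r^2" using maxball_measure[OF r] .
  note RB = ratio_bounds[OF kp Kp a0 c0 ka kb kc kd]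
  show "((2*real q*r-2)^2 - 4*3^9 * sqrt (real q)*(4*real q*r+4)) / (4*r^2 * ((real q+1)^2 + 4*3^9 * sqrt (real q)*(2*real q+6)))
           \<le> ?num / (measure lborel (maxball ctr r) * ?den)"
    using RB(1) unfolding mb4 a0_def d0_def V_def .
  show "?num / (measure lborel (maxball ctr r) * ?den)
           \<le> ((2*real q*r+2)^2 + 4*3^9 * sqrt (real q)*(4*real q*r+8)) / (4*r^2 * ((real q-1)^2 - 4*3^9 * sqrt (real q)*(2*real q+2)))"
    using RB(2) unfolding mb4 b0_def c0_def V_def .
qed

theorem lemma3p4:
  shows "\<exists>c::real>0. \<forall>\<gamma> \<sigma> K0 \<psi> A a. setting \<gamma> \<sigma> K0 \<psi> A a \<longrightarrow>
     (\<forall>q\<ge>1. measure lborel (Eq' \<gamma> \<sigma> A a \<psi> q) \<ge> c * measure lborel (Eq \<gamma> \<psi> q)) \<and>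
     (\<forall>ctr r. 0 < r \<and> maxball ctr r \<subseteq> {0..<1} \<times> {0..<1} \<longrightarrow>
        filterlim (\<lambda>q. measure lborel (maxball ctr r \<inter> Eq' \<gamma> \<sigma> A a \<psi> q) /
                       (measure lborel (maxball ctr r) * measure lborel (Eq' \<gamma> \<sigma> A a \<psi> q)))
          (nhds 1) (inf sequentially (principal {q. 0 < \<psi> q})))"
proof (rule exI[of _ "1/64"], rule conjI)
  show "(0::real) < 1/64" by simp
  show "\<forall>\<gamma> \<sigma> K0 \<psi> A a. setting \<gamma> \<sigma> K0 \<psi> A a \<longrightarrow>
     (\<forall>q\<ge>1. measure lborel (Eq' \<gamma> \<sigma> A a \<psi> q) \<ge> 1/64 * measure lborel (Eq \<gamma> \<psi> q)) \<and>
     (\<forall>ctr r. 0 < r \<and> maxball ctr r \<subseteq> {0..<1} \<times> {0..<1} \<longrightarrow>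
        filterlim (\<lambda>q. measure lborel (maxball ctr r \<inter> Eq' \<gamma> \<sigma> A a \<psi> q) /
                       (measure lborel (maxball ctr r) * measure lborel (Eq' \<gamma> \<sigma> A a \<psi> q)))
          (nhds 1) (inf sequentially (principal {q. 0 < \<psi> q})))"
  proof (intro allI impI)
  fix \<gamma> \<sigma> K0 \<psi> A a
  assume S: "setting \<gamma> \<sigma> K0 \<psi> A a"
  show "(\<forall>q\<ge>1. measure lborel (Eq' \<gamma> \<sigma> A a \<psi> q) \<ge> 1/64 * measure lborel (Eq \<gamma> \<psi> q)) \<and>
     (\<forall>ctr r. 0 < r \<and> maxball ctr r \<subseteq> {0..<1} \<times> {0..<1} \<longrightarrow>
        filterlim (\<lambda>q. measure lborel (maxball ctr r \<inter> Eq' \<gamma> \<sigma> A a \<psi> q) /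
                       (measure lborel (maxball ctr r) * measure lborel (Eq' \<gamma> \<sigma> A a \<psi> q)))
          (nhds 1) (inf sequentially (principal {q. 0 < \<psi> q})))"
  proof (rule conjI)
  show "\<forall>q\<ge>1. measure lborel (Eq' \<gamma> \<sigma> A a \<psi> q) \<ge> 1/64 * measure lborel (Eq \<gamma> \<psi> q)"
    using part_i[OF S] by auto
  show "\<forall>ctr r. 0 < r \<and> maxball ctr r \<subseteq> {0..<1} \<times> {0..<1} \<longrightarrow>
        filterlim (\<lambda>q. measure lborel (maxball ctr r \<inter> Eq' \<gamma> \<sigma> A a \<psi> q) /
                       (measure lborel (maxball ctr r) * measure lborel (Eq' \<gamma> \<sigma> A a \<psi> q)))
          (nhds 1) (inf sequentially (principal {q. 0 < \<psi> q}))"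
  proof (intro allI impI)
  fix ctr :: "real \<times> real" and r :: real
  assume h: "0 < r \<and> maxball ctr r \<subseteq> {0..<1} \<times> {0..<1}"
  then have r: "0 < r" and ball: "maxball ctr r \<subseteq> {0..<1} \<times> {0..<1}" by auto
  let ?F = "inf sequentially (principal {q. 0 < \<psi> q})"
  let ?f = "\<lambda>q. measure lborel (maxball ctr r \<inter> Eq' \<gamma> \<sigma> A a \<psi> q) /
                       (measure lborel (maxball ctr r) * measure lborel (Eq' \<gamma> \<sigma> A a \<psi> q))"
  let ?low = "\<lambda>q::nat. ((2*real q*r-2)^2 - 4*3^9 * sqrt (real q)*(4*real q*r+4)) / (4*r^2 * ((real q+1)^2 + 4*3^9 * sqrt (real q)*(2*real q+6)))"
  let ?up = "\<lambda>q::nat. ((2*real q*r+2)^2 + 4*3^9 * sqrt (real q)*(4*real q*r+8)) / (4*r^2 * ((real q-1)^2 - 4*3^9 * sqrt (real q)*(2*real q+2)))"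
  have low: "(?low \<longlongrightarrow> 1) sequentially" using r by real_asymp
  have up: "(?up \<longlongrightarrow> 1) sequentially" using r by real_asymp
  have e1: "eventually (\<lambda>q::nat. 2*real q*r - 2 \<ge> 0) sequentially" using r by real_asymp
  have e2: "eventually (\<lambda>q::nat. (2*real q*r-2)^2 - 4*3^9 * sqrt (real q)*(4*real q*r+4) \<ge> 0) sequentially" using r by real_asymp
  have e3: "eventually (\<lambda>q::nat. (real q-1)^2 - 4*3^9 * sqrt (real q)*(2*real q+2) > 0) sequentially" by real_asymp
  have e4: "eventually (\<lambda>q::nat. q \<ge> 1) sequentially" by (rule eventually_ge_at_top)
  have ev: "eventually (\<lambda>q. ?low q \<le> ?f q \<and> ?f q \<le> ?up q) ?F"
    unfolding eventually_inf_principal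
  proof (rule eventually_mono[OF eventually_conj[OF e1 eventually_conj[OF e2 eventually_conj[OF e3 e4]]]])
    fix q :: nat assume c: "2*real q*r - 2 \<ge> 0 \<and> (2*real q*r-2)^2 - 4*3^9 * sqrt (real q)*(4*real q*r+4) \<ge> 0 \<and>
        (real q-1)^2 - 4*3^9 * sqrt (real q)*(2*real q+2) > 0 \<and> q \<ge> 1"
    show "q \<in> {q. 0 < \<psi> q} \<longrightarrow> ?low q \<le> ?f q \<and> ?f q \<le> ?up q"
    proof
      assume "q \<in> {q. 0 < \<psi> q}"
      then have psi0: "0 < \<psi> q" by simp
      show "?low q \<le> ?f q \<and> ?f q \<le> ?up q"
        using part_ii_q[OF S _ psi0 r ball] c by auto
    qed
  qed
  have lowF: "(?low \<longlongrightarrow> 1) ?F" by (rule tendsto_mono[OF inf_le1 low])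
  have upF: "(?up \<longlongrightarrow> 1) ?F" by (rule tendsto_mono[OF inf_le1 up])
  show "filterlim ?f (nhds 1) ?F"
    by (rule tendsto_sandwich[OF eventually_mono[OF ev] eventually_mono[OF ev] lowF upF]) auto
  qed
  qed
  qed
qed

end
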